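(* Let $n_1,n_2\ge0$, $n=n_1+n_2+1$, and let $\psi_i:N_i\to\mathbb{S}^{2n_i+1}$ ($i=1,2$) be C-minimal Legendrian immersions of $n_i$-dimensional Riemannian manifolds $N_i$. For any $\delta\in(0,\pi/2)$, writing $c_\delta=\cos\delta$, $s_\delta=\sin\delta$, the map \[\phi_\delta:\mathbb{R}\times N_1\times N_2\to\mathbb{S}^{2n+1},\quad \phi_\delta(t,p,q)=\big(c_\delta\exp(i\,s_\delta^{n_1+1}c_\delta^{n_2-1}t)\,\psi_1(p),\ s_\delta\exp(-i\,s_\delta^{n_1-1}c_\delta^{n_2+1}t)\,\psi_2(q)\big)\] is a C-minimal Legendrian immersion. In particular, if $\psi_1,\psi_2$ are minimal Legendrian immersions and $\delta_0=\arctan\sqrt{(n_2+1)/(n_1+1)}$, then $\phi_{\delta_0}$ is minimal.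
   Context: $\mathbb{C}^{m}$ carries the metric $\langle v,w\rangle=\Re\sum v_k\bar w_k$ and complex structure $J$ (multiplication by $i$); $\mathbb{S}^{2m-1}$ is the unit sphere with contact form $\Lambda_z(v)=\langle v,Jz\rangle$. An immersion $\phi:M^k\to\mathbb{S}^{2k+1}$ is Legendrian if $\phi^*\Lambda\equiv0$. With the induced metric and $H=\frac1k\operatorname{trace}\sigma$ the mean curvature vector in the sphere, $JH$ is tangent to $M$; $\phi$ is C-minimal if $\operatorname{div}JH=0$. $\mathbb{C}^{n+1}=\mathbb{C}^{n_1+1}\times\mathbb{C}^{n_2+1}$. *)

theory Defs
  imports "HOL-Analysis.Analysis"
begin

text \<open>A point of R^k is a function nat => real vanishing at
indices >= k (product topology on nat => real restricts to the Euclidean topology on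
this slice). A vector of C^m is a function nat => complex, components j < m.\<close>

type_synonym coord = "nat \<Rightarrow> real"
type_synonym cvec = "nat \<Rightarrow> complex"

definition rn :: "nat \<Rightarrow> coord set" where
  "rn k = {x. \<forall>i\<ge>k. x i = 0}"

definition pd :: "nat \<Rightarrow> (coord \<Rightarrow> 'a::real_normed_vector) \<Rightarrow> coord \<Rightarrow> 'a" where
  "pd i f x = vector_derivative (\<lambda>t. f (x(i := t))) (at (x i))"

fun ipd :: "nat list \<Rightarrow> (coord \<Rightarrow> 'a::real_normed_vector) \<Rightarrow> coord \<Rightarrow> 'a" where
  "ipd [] f = f"
| "ipd (i # is) f = pd i (ipd is f)"

definition smooth_on :: "nat \<Rightarrow> coord set \<Rightarrow> (coord \<Rightarrow> 'a::real_normed_vector) \<Rightarrow> bool" where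
  "smooth_on k U f \<longleftrightarrow> (\<forall>is. set is \<subseteq> {..<k} \<longrightarrow>
      continuous_on U (ipd is f) \<and>
      (\<forall>i<k. \<forall>x\<in>U. (\<lambda>t. ipd is f (x(i := t))) differentiable (at (x i))))"

definition vpd :: "nat \<Rightarrow> (coord \<Rightarrow> cvec) \<Rightarrow> coord \<Rightarrow> cvec" where
  "vpd i \<phi> x = (\<lambda>j. pd i (\<lambda>y. \<phi> y j) x)"

definition cinner :: "nat \<Rightarrow> cvec \<Rightarrow> cvec \<Rightarrow> real" where
  "cinner m v w = (\<Sum>j<m. Re (v j * cnj (w j)))"

definition Jc :: "cvec \<Rightarrow> cvec" where
  "Jc v = (\<lambda>j. \<i> * v j)"

definition gmet :: "nat \<Rightarrow> (coord \<Rightarrow> cvec) \<Rightarrow> coord \<Rightarrow> nat \<Rightarrow> nat \<Rightarrow> real" where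
  "gmet m \<phi> x a b = cinner m (vpd a \<phi> x) (vpd b \<phi> x)"

definition ginv :: "nat \<Rightarrow> nat \<Rightarrow> (coord \<Rightarrow> cvec) \<Rightarrow> coord \<Rightarrow> nat \<Rightarrow> nat \<Rightarrow> real" where
  "ginv k m \<phi> x = (THE G. (\<forall>a<k. \<forall>b<k. (\<Sum>c<k. gmet m \<phi> x a c * G c b) = (if a = b then 1 else 0))
                         \<and> (\<forall>a b. k \<le> a \<or> k \<le> b \<longrightarrow> G a b = 0))"

definition immersion :: "nat \<Rightarrow> nat \<Rightarrow> coord set \<Rightarrow> (coord \<Rightarrow> cvec) \<Rightarrow> bool" where
  "immersion k m U \<phi> \<longleftrightarrow> U \<subseteq> rn k \<and> openin (top_of_set (rn k)) U \<and>
     (\<forall>j<m. smooth_on k U (\<lambda>x. \<phi> x j)) \<and>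
     (\<forall>x\<in>U. \<forall>c::nat \<Rightarrow> real. (\<forall>j<m. (\<Sum>a<k. of_real (c a) * vpd a \<phi> x j) = 0)
                \<longrightarrow> (\<forall>a<k. c a = 0))"

text \<open>Legendrian: image in the unit sphere of C^m and phi^* Lambda = 0, Lambda_z(v) = <v, Jz>\<close>
definition legendrian :: "nat \<Rightarrow> nat \<Rightarrow> coord set \<Rightarrow> (coord \<Rightarrow> cvec) \<Rightarrow> bool" where
  "legendrian k m U \<phi> \<longleftrightarrow> (\<forall>x\<in>U. cinner m (\<phi> x) (\<phi> x) = 1 \<and>
      (\<forall>a<k. cinner m (vpd a \<phi> x) (Jc (\<phi> x)) = 0))"

text \<open>tangential projection onto span of d_a phi, and projection onto the normal bundle of M in the sphere\<close>
definition tanproj :: "nat \<Rightarrow> nat \<Rightarrow> (coord \<Rightarrow> cvec) \<Rightarrow> coord \<Rightarrow> cvec \<Rightarrow> cvec" where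
  "tanproj k m \<phi> x v = (\<lambda>j. \<Sum>a<k. \<Sum>b<k.
      of_real (ginv k m \<phi> x a b * cinner m v (vpd b \<phi> x)) * vpd a \<phi> x j)"

definition nproj :: "nat \<Rightarrow> nat \<Rightarrow> (coord \<Rightarrow> cvec) \<Rightarrow> coord \<Rightarrow> cvec \<Rightarrow> cvec" where
  "nproj k m \<phi> x v = (\<lambda>j. v j - tanproj k m \<phi> x v j - of_real (cinner m v (\<phi> x)) * \<phi> x j)"

definition sff :: "nat \<Rightarrow> nat \<Rightarrow> (coord \<Rightarrow> cvec) \<Rightarrow> coord \<Rightarrow> nat \<Rightarrow> nat \<Rightarrow> cvec" where
  "sff k m \<phi> x a b = nproj k m \<phi> x (vpd a (vpd b \<phi>) x)"

definition mcurv :: "nat \<Rightarrow> nat \<Rightarrow> (coord \<Rightarrow> cvec) \<Rightarrow> coord \<Rightarrow> cvec" where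
  "mcurv k m \<phi> x = (\<lambda>j. of_real (1 / real k) *
      (\<Sum>a<k. \<Sum>b<k. of_real (ginv k m \<phi> x a b) * sff k m \<phi> x a b j))"

text \<open>coordinates X^a of the tangent vector field JH = X^a d_a phi\<close>
definition JHcoord :: "nat \<Rightarrow> nat \<Rightarrow> (coord \<Rightarrow> cvec) \<Rightarrow> nat \<Rightarrow> coord \<Rightarrow> real" where
  "JHcoord k m \<phi> a x = (\<Sum>b<k. ginv k m \<phi> x a b * cinner m (Jc (mcurv k m \<phi> x)) (vpd b \<phi> x))"

definition christoffel :: "nat \<Rightarrow> nat \<Rightarrow> (coord \<Rightarrow> cvec) \<Rightarrow> coord \<Rightarrow> nat \<Rightarrow> nat \<Rightarrow> nat \<Rightarrow> real" where
  "christoffel k m \<phi> x a b c = (1/2) * (\<Sum>l<k. ginv k m \<phi> x a l *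
      (pd b (\<lambda>y. gmet m \<phi> y l c) x + pd c (\<lambda>y. gmet m \<phi> y l b) x - pd l (\<lambda>y. gmet m \<phi> y b c) x))"

definition divJH :: "nat \<Rightarrow> nat \<Rightarrow> (coord \<Rightarrow> cvec) \<Rightarrow> coord \<Rightarrow> real" where
  "divJH k m \<phi> x = (\<Sum>a<k. pd a (JHcoord k m \<phi> a) x +
      (\<Sum>b<k. christoffel k m \<phi> x a a b * JHcoord k m \<phi> b x))"

definition C_minimal :: "nat \<Rightarrow> nat \<Rightarrow> coord set \<Rightarrow> (coord \<Rightarrow> cvec) \<Rightarrow> bool" where
  "C_minimal k m U \<phi> \<longleftrightarrow> (\<forall>x\<in>U. divJH k m \<phi> x = 0)"

definition minimal :: "nat \<Rightarrow> nat \<Rightarrow> coord set \<Rightarrow> (coord \<Rightarrow> cvec) \<Rightarrow> bool" where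
  "minimal k m U \<phi> \<longleftrightarrow> (\<forall>x\<in>U. \<forall>j<m. mcurv k m \<phi> x j = 0)"

text \<open>Legendrian immersion psi : N^k -> S^(2k+1) in C^(k+1), given in a chart U of N\<close>
definition C_minimal_legendrian_immersion :: "nat \<Rightarrow> coord set \<Rightarrow> (coord \<Rightarrow> cvec) \<Rightarrow> bool" where
  "C_minimal_legendrian_immersion k U \<phi> \<longleftrightarrow>
     immersion k (k+1) U \<phi> \<and> legendrian k (k+1) U \<phi> \<and> C_minimal k (k+1) U \<phi>"

definition minimal_legendrian_immersion :: "nat \<Rightarrow> coord set \<Rightarrow> (coord \<Rightarrow> cvec) \<Rightarrow> bool" where
  "minimal_legendrian_immersion k U \<phi> \<longleftrightarrow>
     immersion k (k+1) U \<phi> \<and> legendrian k (k+1) U \<phi> \<and> minimal k (k+1) U \<phi>"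

text \<open>Coordinates (t,p,q) on R x R^n1 x R^n2 = R^(n1+n2+1): x 0 = t, x (1+a) = p a, x (1+n1+b) = q b\<close>
definition split1 :: "nat \<Rightarrow> coord \<Rightarrow> coord" where
  "split1 n1 x = (\<lambda>a. if a < n1 then x (Suc a) else 0)"

definition split2 :: "nat \<Rightarrow> nat \<Rightarrow> coord \<Rightarrow> coord" where
  "split2 n1 n2 x = (\<lambda>b. if b < n2 then x (Suc (n1 + b)) else 0)"

definition prod_dom :: "nat \<Rightarrow> nat \<Rightarrow> coord set \<Rightarrow> coord set \<Rightarrow> coord set" where
  "prod_dom n1 n2 U1 U2 = {x \<in> rn (n1 + n2 + 1). split1 n1 x \<in> U1 \<and> split2 n1 n2 x \<in> U2}"

definition phi_delta :: "nat \<Rightarrow> nat \<Rightarrow> real \<Rightarrow> (coord \<Rightarrow> cvec) \<Rightarrow> (coord \<Rightarrow> cvec) \<Rightarrow> coord \<Rightarrow> cvec" where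
  "phi_delta n1 n2 \<delta> \<psi>1 \<psi>2 x = (\<lambda>j.
     if j < n1 + 1 then
       of_real (cos \<delta>) * exp (\<i> * of_real (sin \<delta> powi (int n1 + 1) * cos \<delta> powi (int n2 - 1) * x 0))
         * \<psi>1 (split1 n1 x) j
     else
       of_real (sin \<delta>) * exp (- \<i> * of_real (sin \<delta> powi (int n1 - 1) * cos \<delta> powi (int n2 + 1) * x 0))
         * \<psi>2 (split2 n1 n2 x) (j - (n1 + 1)))"

end

theory Submission
  imports Defs "Jordan_Normal_Form.Determinant"
begin

definition hlv :: "nat \<Rightarrow> coord \<Rightarrow> (coord \<Rightarrow> 'a::real_normed_vector) \<Rightarrow> 'a \<Rightarrow> bool" where
  "hlv i x F D \<longleftrightarrow> ((\<lambda>t. F (x(i:=t))) has_vector_derivative D) (at (x i))"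

lemma hlv_pd: "hlv i x F D \<Longrightarrow> pd i F x = D"
  unfolding hlv_def pd_def by (rule vector_derivative_at)

lemma hlv_of_diff: "(\<lambda>t. F (x(i:=t))) differentiable (at (x i)) \<Longrightarrow> hlv i x F (pd i F x)"
  unfolding hlv_def pd_def by (simp add: vector_derivative_works[symmetric])

lemma hlv_diff_of: "hlv i x F D \<Longrightarrow> (\<lambda>t. F (x(i:=t))) differentiable (at (x i))"
  unfolding hlv_def differentiable_def has_vector_derivative_def by blast

lemma hlv_const[simp]: "hlv i x (\<lambda>y. K) 0"
  unfolding hlv_def by simp

lemma hlv_add: "hlv i x F D \<Longrightarrow> hlv i x G D' \<Longrightarrow> hlv i x (\<lambda>y. F y + G y) (D + D')"
  unfolding hlv_def by (intro derivative_intros)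

lemma hlv_diff: "hlv i x F D \<Longrightarrow> hlv i x G D' \<Longrightarrow> hlv i x (\<lambda>y. F y - G y) (D - D')"
  unfolding hlv_def by (intro derivative_intros)

lemma hlv_minus: "hlv i x F D \<Longrightarrow> hlv i x (\<lambda>y. - F y) (- D)"
  unfolding hlv_def by (intro derivative_intros)

lemma hlv_mult: "hlv i x F D \<Longrightarrow> hlv i x G D' \<Longrightarrow>
   hlv i x (\<lambda>y. F y * G y) (F x * D' + D * (G x :: 'a::real_normed_algebra))"
  unfolding hlv_def using has_vector_derivative_mult[of "\<lambda>t. F (x(i:=t))" D "x i" UNIV "\<lambda>t. G (x(i:=t))" D']
  by simp

lemma hlv_cmult: "hlv i x F D \<Longrightarrow> hlv i x (\<lambda>y. c * F y) (c * (D::'a::real_normed_algebra))"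
  unfolding hlv_def by (rule has_vector_derivative_mult_right)

lemma hlv_sum: "(\<And>a. a \<in> A \<Longrightarrow> hlv i x (F a) (D a)) \<Longrightarrow> hlv i x (\<lambda>y. \<Sum>a\<in>A. F a y) (\<Sum>a\<in>A. D a)"
  unfolding hlv_def by (rule has_vector_derivative_sum) auto

lemma hlv_cnj: "hlv i x F D \<Longrightarrow> hlv i x (\<lambda>y. cnj (F y)) (cnj D)"
  unfolding hlv_def by (rule has_vector_derivative_cnj)

lemma hlv_Re: "hlv i x F D \<Longrightarrow> hlv i x (\<lambda>y. Re (F y)) (Re D)"
  unfolding hlv_def has_vector_derivative_def
  by (drule bounded_linear.has_derivative[OF bounded_linear_Re]) simp

lemma hlv_of_real: "hlv i x F D \<Longrightarrow> hlv i x (\<lambda>y. of_real (F y) :: complex) (of_real D)"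
  unfolding hlv_def has_vector_derivative_def
  by (drule bounded_linear.has_derivative[OF bounded_linear_of_real]) (simp add: scaleR_conv_of_real)

lemma hlv_cinner:
  assumes "\<And>j. j < m \<Longrightarrow> hlv i x (\<lambda>y. F y j) (D j)" "\<And>j. j < m \<Longrightarrow> hlv i x (\<lambda>y. G y j) (D' j)"
  shows "hlv i x (\<lambda>y. cinner m (F y) (G y)) (cinner m D (G x) + cinner m (F x) D')"
proof -
  have "hlv i x (\<lambda>y. \<Sum>j<m. Re (F y j * cnj (G y j))) (\<Sum>j<m. Re (F x j * cnj (D' j) + D j * cnj (G x j)))"
    by (intro hlv_sum hlv_Re hlv_mult hlv_cnj assms) auto
  thus ?thesis unfolding cinner_def by (simp add: sum.distrib algebra_simps)
qed

lemma hlv_unique: "hlv i x F D \<Longrightarrow> hlv i x F D' \<Longrightarrow> D = D'"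
  using hlv_pd by metis

lemma rn_upd: "x \<in> rn k \<Longrightarrow> i < k \<Longrightarrow> x(i:=t) \<in> rn k"
  unfolding rn_def by auto

lemma cont_upd: "continuous_on UNIV (\<lambda>t::real. (x::coord)(i:=t))"
  apply (intro continuous_on_coordinatewise_then_product)
  subgoal for j by (cases "j = i") (auto simp: fun_upd_def)
  done

lemma line_open:
  assumes "openin (top_of_set (rn k)) S" "i < k" "x \<in> S"
  shows "open {t. x(i:=t) \<in> S}" "x i \<in> {t. x(i:=t) \<in> S}"
proof -
  obtain Op where O: "open Op" "S = rn k \<inter> Op" using assms(1) by (auto simp: openin_open)
  have xr: "x \<in> rn k" using assms O by auto
  have "{t. x(i:=t) \<in> S} = (\<lambda>t. x(i:=t)) -` Op"
    using O rn_upd[OF xr assms(2)] by auto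
  moreover have "open ((\<lambda>t. x(i:=t)) -` Op)"
    using open_vimage[OF O(1) cont_upd] .
  ultimately show "open {t. x(i:=t) \<in> S}" by simp
  show "x i \<in> {t. x(i:=t) \<in> S}" using assms by simp
qed

lemma hlv_cong:
  assumes "openin (top_of_set (rn k)) S" "i < k" "x \<in> S" "\<And>y. y \<in> S \<Longrightarrow> F y = G y" "hlv i x F D"
  shows "hlv i x G D"
  using assms(5) unfolding hlv_def
  by (rule has_vector_derivative_transform_within_open[OF _ line_open(1)[OF assms(1-3)] line_open(2)[OF assms(1-3)]])
     (simp add: assms(4))

lemma pd_cong:
  assumes "openin (top_of_set (rn k)) S" "i < k" "x \<in> S" "\<And>y. y \<in> S \<Longrightarrow> F y = G y"
  shows "pd i F x = pd i G x"
proof -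
  have ev: "\<forall>\<^sub>F t in nhds (x i). t \<in> UNIV \<longrightarrow> F (x(i:=t)) = G (x(i:=t))"
    using line_open[OF assms(1-3)] assms(4) unfolding eventually_nhds by blast
  show ?thesis unfolding pd_def
    by (rule vector_derivative_cong_eq[OF ev]) auto
qed

lemma LD_cong:
  assumes "openin (top_of_set (rn k)) S" "i < k" "x \<in> S" "\<And>y. y \<in> S \<Longrightarrow> F y = G y"
    "(\<lambda>t. F (x(i:=t))) differentiable (at (x i))"
  shows "(\<lambda>t. G (x(i:=t))) differentiable (at (x i))"
  using hlv_diff_of[OF hlv_cong[OF assms(1-4) hlv_of_diff[OF assms(5)]]] .

lemma hlv_line_const:
  assumes "\<And>t. F (x(i:=t)) = K"
  shows "hlv i x F 0"
proof -
  have "(\<lambda>t. F (x(i:=t))) = (\<lambda>t. K)" using assms by auto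
  thus ?thesis unfolding hlv_def by simp
qed

definition ldx :: "nat \<Rightarrow> coord \<Rightarrow> (coord \<Rightarrow> 'a::real_normed_vector) \<Rightarrow> bool" where
  "ldx i x F \<longleftrightarrow> (\<exists>D. hlv i x F D)"

lemma ldx_hlv: "ldx i x F \<Longrightarrow> hlv i x F (pd i F x)"
  unfolding ldx_def using hlv_pd by metis

lemma ldxI: "hlv i x F D \<Longrightarrow> ldx i x F"
  unfolding ldx_def by blast

lemma ldx_const[simp]: "ldx i x (\<lambda>y. K)"
  using hlv_const ldxI by blast

lemma ldx_add: "ldx i x F \<Longrightarrow> ldx i x G \<Longrightarrow> ldx i x (\<lambda>y. F y + G y)"
  unfolding ldx_def using hlv_add by blast

lemma ldx_diff: "ldx i x F \<Longrightarrow> ldx i x G \<Longrightarrow> ldx i x (\<lambda>y. F y - G y)"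
  unfolding ldx_def using hlv_diff by blast

lemma ldx_minus: "ldx i x F \<Longrightarrow> ldx i x (\<lambda>y. - F y)"
  unfolding ldx_def using hlv_minus by blast

lemma ldx_mult: "ldx i x F \<Longrightarrow> ldx i x G \<Longrightarrow> ldx i x (\<lambda>y. F y * (G y :: 'a::real_normed_algebra))"
  unfolding ldx_def using hlv_mult by blast

lemma ldx_sum: "(\<And>a. a \<in> A \<Longrightarrow> ldx i x (F a)) \<Longrightarrow> ldx i x (\<lambda>y. \<Sum>a\<in>A. F a y)"
  unfolding ldx_def using hlv_sum by metis

lemma ldx_cnj: "ldx i x F \<Longrightarrow> ldx i x (\<lambda>y. cnj (F y))"
  unfolding ldx_def using hlv_cnj by blast

lemma ldx_Re: "ldx i x F \<Longrightarrow> ldx i x (\<lambda>y. Re (F y))"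
  unfolding ldx_def using hlv_Re by blast

lemma ldx_of_real: "ldx i x F \<Longrightarrow> ldx i x (\<lambda>y. of_real (F y) :: complex)"
  unfolding ldx_def using hlv_of_real by blast

lemma ldx_cinner:
  assumes "\<And>j. j < m \<Longrightarrow> ldx i x (\<lambda>y. F y j)" "\<And>j. j < m \<Longrightarrow> ldx i x (\<lambda>y. G y j)"
  shows "ldx i x (\<lambda>y. cinner m (F y) (G y))"
  unfolding cinner_def by (intro ldx_sum ldx_Re ldx_mult ldx_cnj assms) auto

lemma ldx_prod: "finite A \<Longrightarrow> (\<And>a. a \<in> A \<Longrightarrow> ldx i x (F a)) \<Longrightarrow> ldx i x (\<lambda>y. \<Prod>a\<in>A. (F a y :: real))"
proof (induction A rule: finite_induct)
  case empty thus ?case by simp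
next
  case (insert a A) thus ?case by (simp add: ldx_mult)
qed

lemma ldx_inverse: "ldx i x F \<Longrightarrow> F x \<noteq> 0 \<Longrightarrow> ldx i x (\<lambda>y. inverse (F y :: real))"
  unfolding ldx_def hlv_def
  apply (auto simp: has_real_derivative_iff_has_vector_derivative[symmetric])
  subgoal for D using DERIV_inverse_fun[of "\<lambda>t. F (x(i := t))" D "x i" UNIV] by auto
  done

lemma ldx_divide: "ldx i x F \<Longrightarrow> ldx i x G \<Longrightarrow> G x \<noteq> 0 \<Longrightarrow> ldx i x (\<lambda>y. F y / (G y :: real))"
  unfolding divide_inverse by (intro ldx_mult ldx_inverse)

lemma ldx_cong:
  assumes "openin (top_of_set (rn k)) S" "i < k" "x \<in> S" "\<And>y. y \<in> S \<Longrightarrow> F y = G y" "ldx i x F"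
  shows "ldx i x G"
  using assms hlv_cong unfolding ldx_def by metis

definition detf :: "nat \<Rightarrow> (nat \<Rightarrow> nat \<Rightarrow> real) \<Rightarrow> real" where
  "detf n e = (\<Sum>p \<in> {p. p permutes {0..<n}}. of_int (sign p) * (\<Prod>i = 0..<n. e i (p i)))"

definition adjf :: "nat \<Rightarrow> (nat \<Rightarrow> nat \<Rightarrow> real) \<Rightarrow> nat \<Rightarrow> nat \<Rightarrow> real" where
  "adjf n e a b = (-1)^(b+a) * detf (n-1) (\<lambda>i' j'. e (if i' < b then i' else Suc i') (if j' < a then j' else Suc j'))"

definition invf :: "nat \<Rightarrow> (nat \<Rightarrow> nat \<Rightarrow> real) \<Rightarrow> nat \<Rightarrow> nat \<Rightarrow> real" where
  "invf n e a b = (if a < n \<and> b < n then adjf n e a b / detf n e else 0)"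

lemma detf_det: "Determinant.det (Matrix.mat n n (\<lambda>(a,b). e a b)) = detf n e"
  unfolding detf_def by (subst det_def'[of _ n]) (auto intro!: sum.cong prod.cong simp: permutes_def)

lemma adjf_adj: "a < n \<Longrightarrow> b < n \<Longrightarrow> adj_mat (Matrix.mat n n (\<lambda>(a,b). e a b)) $$ (a,b) = adjf n e a b"
proof -
  assume ab: "a < n" "b < n"
  have "mat_delete (Matrix.mat n n (\<lambda>(a,b). e a b)) b a = Matrix.mat (n-1) (n-1)
     (\<lambda>(i',j'). e (if i' < b then i' else Suc i') (if j' < a then j' else Suc j'))"
    unfolding mat_delete_def by (rule eq_matI) auto
  thus ?thesis using ab unfolding adj_mat_def adjf_def cofactor_def
    by (simp add: detf_det[symmetric])
qed

lemma invf_right: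
  assumes inj: "\<And>v. (\<forall>a<n. (\<Sum>c<n. e a c * v c) = 0) \<Longrightarrow> (\<forall>a<n. v a = 0)"
  shows "detf n e \<noteq> 0" "\<And>a b. a < n \<Longrightarrow> b < n \<Longrightarrow> (\<Sum>c<n. e a c * invf n e c b) = (if a = b then 1 else 0)"
proof -
  let ?M = "Matrix.mat n n (\<lambda>(a,b). e a b)"
  have M: "?M \<in> carrier_mat n n" by simp
  show d: "detf n e \<noteq> 0"
  proof
    assume "detf n e = 0"
    then obtain v where v: "v \<in> carrier_vec n" "v \<noteq> 0\<^sub>v n" "?M *\<^sub>v v = 0\<^sub>v n"
      using det_0_iff_vec_prod_zero[OF M] detf_det by metis
    have "\<forall>a<n. (\<Sum>c<n. e a c * (v $ c)) = 0"
    proof (intro allI impI)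
      fix a assume a: "a < n"
      have "(?M *\<^sub>v v) $ a = 0" using v(3) a by simp
      thus "(\<Sum>c<n. e a c * (v $ c)) = 0" using a v(1)
        by (simp add: mult_mat_vec_def scalar_prod_def Matrix.row_def atLeast0LessThan)
    qed
    from inj[OF this] have "\<forall>a<n. v $ a = 0" .
    hence "v = 0\<^sub>v n" using v(1) by (intro eq_vecI) auto
    thus False using v(2) by simp
  qed
  fix a b assume ab: "a < n" "b < n"
  have "(?M * adj_mat ?M) $$ (a,b) = (Determinant.det ?M \<cdot>\<^sub>m 1\<^sub>m n) $$ (a,b)"
    using adj_mat(2)[OF M] by simp
  also have "\<dots> = (if a = b then detf n e else 0)" using ab by (simp add: detf_det)
  moreover have "(?M * adj_mat ?M) $$ (a,b) = (\<Sum>c<n. e a c * adjf n e c b)"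
    using ab adj_mat(1)[OF M]
    by (auto simp: scalar_prod_def Matrix.row_def col_def atLeast0LessThan adjf_adj intro!: sum.cong)
  ultimately have eq: "(\<Sum>c<n. e a c * adjf n e c b) = (if a = b then detf n e else 0)"
    by simp
  have "(\<Sum>c<n. e a c * invf n e c b) = (\<Sum>c<n. e a c * adjf n e c b) / detf n e"
    unfolding invf_def using ab by (simp add: sum_divide_distrib)
  also have "\<dots> = (if a = b then 1 else 0)" using eq d by simp
  finally show "(\<Sum>c<n. e a c * invf n e c b) = (if a = b then 1 else 0)" .
qed

lemma ldx_detf: "(\<And>a b. a < n \<Longrightarrow> b < n \<Longrightarrow> ldx i x (\<lambda>y. e y a b)) \<Longrightarrow> ldx i x (\<lambda>y. detf n (e y))"
  unfolding detf_def by (intro ldx_sum ldx_mult ldx_prod) (auto simp: permutes_def)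

lemma ldx_adjf: "a < n \<Longrightarrow> b < n \<Longrightarrow> (\<And>a b. a < n \<Longrightarrow> b < n \<Longrightarrow> ldx i x (\<lambda>y. e y a b)) \<Longrightarrow> ldx i x (\<lambda>y. adjf n (e y) a b)"
  unfolding adjf_def by (intro ldx_mult ldx_const ldx_detf) auto

lemma ldx_invf: "(\<And>a b. a < n \<Longrightarrow> b < n \<Longrightarrow> ldx i x (\<lambda>y. e y a b)) \<Longrightarrow> detf n (e x) \<noteq> 0 \<Longrightarrow>
   ldx i x (\<lambda>y. invf n (e y) a b)"
  unfolding invf_def by (cases "a < n \<and> b < n") (auto intro!: ldx_divide ldx_adjf ldx_detf)

lemma Re_mult_cnj_sym: "Re (v * cnj w) = Re (w * cnj v)"
  by (simp add: mult.commute)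
lemma cinner_sym: "cinner m v w = cinner m w v"
  unfolding cinner_def by (simp add: mult.commute)
lemma cinner_sum_left: "finite A \<Longrightarrow> cinner m (\<lambda>j. \<Sum>a\<in>A. V a j) W = (\<Sum>a\<in>A. cinner m (V a) W)"
  unfolding cinner_def by (simp add: sum_distrib_right Re_sum sum.swap[of _ A])
lemma cinner_self_zero: assumes "cinner m w w = 0" "j < m" shows "w j = 0"
proof -
  have e: "\<And>j. Re (w j * cnj (w j)) = (cmod (w j))^2"
    by (metis Re_complex_of_real complex_norm_square)
  have "\<forall>j\<in>{..<m}. (cmod (w j))^2 = 0"
    using assms(1) unfolding cinner_def e by (subst sum_nonneg_eq_0_iff[symmetric]) auto
  thus ?thesis using assms(2) by auto
qed
lemma cinner_scale_left: "cinner m (\<lambda>j. of_real r * v j) w = r * cinner m v w"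
  unfolding cinner_def by (simp add: sum_distrib_left mult.assoc)
lemma cinner_add_left: "cinner m (\<lambda>j. u j + v j) w = cinner m u w + cinner m v w"
  unfolding cinner_def by (simp add: sum.distrib algebra_simps)
lemma cinner_diff_left: "cinner m (\<lambda>j. u j - v j) w = cinner m u w - cinner m v w"
  unfolding cinner_def by (simp add: sum_subtractf algebra_simps)
lemma cinner_sum_right: "finite A \<Longrightarrow> cinner m W (\<lambda>j. \<Sum>a\<in>A. V a j) = (\<Sum>a\<in>A. cinner m W (V a))"
  by (subst cinner_sym, subst cinner_sum_left) (auto simp: cinner_sym)
lemma cinner_scale_right: "cinner m w (\<lambda>j. of_real r * v j) = r * cinner m w v"
  by (subst cinner_sym, subst cinner_scale_left) (auto simp: cinner_sym)
lemma cinner_add_right: "cinner m w (\<lambda>j. u j + v j) = cinner m w u + cinner m w v"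
  by (subst cinner_sym, subst cinner_add_left) (auto simp: cinner_sym)
lemma cinner_diff_right: "cinner m w (\<lambda>j. u j - v j) = cinner m w u - cinner m w v"
  by (subst cinner_sym, subst cinner_diff_left) (auto simp: cinner_sym)
lemma cinner_cong: "(\<And>j. j < m \<Longrightarrow> v j = v' j) \<Longrightarrow> (\<And>j. j < m \<Longrightarrow> w j = w' j) \<Longrightarrow> cinner m v w = cinner m v' w'"
  unfolding cinner_def by (intro sum.cong) auto

definition ginvP :: "nat \<Rightarrow> nat \<Rightarrow> (coord \<Rightarrow> cvec) \<Rightarrow> coord \<Rightarrow> (nat \<Rightarrow> nat \<Rightarrow> real) \<Rightarrow> bool" where
  "ginvP k m \<phi> x G \<longleftrightarrow> (\<forall>a<k. \<forall>b<k. (\<Sum>c<k. gmet m \<phi> x a c * G c b) = (if a = b then 1 else 0))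
                         \<and> (\<forall>a b. k \<le> a \<or> k \<le> b \<longrightarrow> G a b = 0)"

definition indep :: "nat \<Rightarrow> nat \<Rightarrow> (coord \<Rightarrow> cvec) \<Rightarrow> coord \<Rightarrow> bool" where
  "indep k m \<phi> x \<longleftrightarrow> (\<forall>c::nat \<Rightarrow> real. (\<forall>j<m. (\<Sum>a<k. of_real (c a) * vpd a \<phi> x j) = 0)
                \<longrightarrow> (\<forall>a<k. c a = 0))"

lemma gram_quad: "cinner m (\<lambda>j. \<Sum>a<k. of_real (v a) * vpd a \<phi> x j) (\<lambda>j. \<Sum>a<k. of_real (v a) * vpd a \<phi> x j)
   = (\<Sum>a<k. v a * (\<Sum>c<k. gmet m \<phi> x a c * v c))"
  by (simp add: cinner_sum_left cinner_sum_right cinner_scale_left cinner_scale_right gmet_def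
       sum_distrib_left algebra_simps)

lemma gram_inj:
  assumes "indep k m \<phi> x" "\<forall>a<k. (\<Sum>c<k. gmet m \<phi> x a c * v c) = 0"
  shows "\<forall>a<k. v a = 0"
proof -
  let ?w = "\<lambda>j. \<Sum>a<k. of_real (v a) * vpd a \<phi> x j"
  have "cinner m ?w ?w = 0" unfolding gram_quad using assms(2) by simp
  hence "\<forall>j<m. ?w j = 0" using cinner_self_zero by blast
  thus ?thesis using assms(1) unfolding indep_def by blast
qed

lemma ginv_eq:
  assumes "indep k m \<phi> x" "ginvP k m \<phi> x G"
  shows "ginv k m \<phi> x = G"
proof -
  have uniq: "G' = G" if G': "ginvP k m \<phi> x G'" for G'
  proof (intro ext)
    fix a b
    show "G' a b = G a b"
    proof (cases "a < k \<and> b < k")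
      case True
      have "\<forall>a<k. (\<Sum>c<k. gmet m \<phi> x a c * (G' c b - G c b)) = 0"
        using G' assms(2) True unfolding ginvP_def by (simp add: algebra_simps sum_subtractf)
      from gram_inj[OF assms(1) this] True show ?thesis by auto
    next
      case False thus ?thesis using G' assms(2) unfolding ginvP_def by auto
    qed
  qed
  have "ginv k m \<phi> x = (THE G. ginvP k m \<phi> x G)" unfolding ginv_def ginvP_def by simp
  also have "\<dots> = G" by (rule the_equality, rule assms(2), erule uniq)
  finally show ?thesis .
qed

lemma ginvP_invf:
  assumes "indep k m \<phi> x"
  shows "ginvP k m \<phi> x (invf k (gmet m \<phi> x))" "detf k (gmet m \<phi> x) \<noteq> 0"
proof -
  have inj: "\<And>v. (\<forall>a<k. (\<Sum>c<k. gmet m \<phi> x a c * v c) = 0) \<Longrightarrow> (\<forall>a<k. v a = 0)"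
    using gram_inj[OF assms] by blast
  show "ginvP k m \<phi> x (invf k (gmet m \<phi> x))"
    unfolding ginvP_def using invf_right(2)[OF inj] by (auto simp: invf_def)
  show "detf k (gmet m \<phi> x) \<noteq> 0" using invf_right(1)[OF inj] .
qed

lemma ginv_invf: "indep k m \<phi> x \<Longrightarrow> ginv k m \<phi> x = invf k (gmet m \<phi> x)"
  using ginv_eq ginvP_invf by blast

lemma ginvP_ginv: "indep k m \<phi> x \<Longrightarrow> ginvP k m \<phi> x (ginv k m \<phi> x)"
  using ginv_invf ginvP_invf by metis

lemma vpd1_ipd: "vpd b \<psi> y j = ipd [b] (\<lambda>y. \<psi> y j) y"
  unfolding vpd_def by simp

lemma vpd2_ipd: "vpd a (vpd b \<psi>) y j = ipd [a,b] (\<lambda>y. \<psi> y j) y"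
  unfolding vpd_def by simp

locale imm =
  fixes k m :: nat and U :: "coord set" and \<psi> :: "coord \<Rightarrow> cvec"
  assumes imm: "immersion k m U \<psi>"
begin

lemma U_open: "openin (top_of_set (rn k)) U" and U_rn: "U \<subseteq> rn k"
  using imm unfolding immersion_def by auto

lemma indep: "x \<in> U \<Longrightarrow> indep k m \<psi> x"
  using imm unfolding immersion_def indep_def by blast

lemma smooth: "x \<in> U \<Longrightarrow> i < k \<Longrightarrow> j < m \<Longrightarrow> set is \<subseteq> {..<k} \<Longrightarrow>
   hlv i x (ipd is (\<lambda>y. \<psi> y j)) (ipd (i#is) (\<lambda>y. \<psi> y j) x)"
  using imm unfolding immersion_def smooth_on_def by (auto intro!: hlv_of_diff)

lemma smooth_cont: "j < m \<Longrightarrow> set is \<subseteq> {..<k} \<Longrightarrow> continuous_on U (ipd is (\<lambda>y. \<psi> y j))"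
  using imm unfolding immersion_def smooth_on_def by auto

lemma h0: "x \<in> U \<Longrightarrow> i < k \<Longrightarrow> j < m \<Longrightarrow> hlv i x (\<lambda>y. \<psi> y j) (vpd i \<psi> x j)"
  using smooth[of x i j "[]"] by (simp add: vpd_def)

lemma h1: "x \<in> U \<Longrightarrow> i < k \<Longrightarrow> j < m \<Longrightarrow> b < k \<Longrightarrow> hlv i x (\<lambda>y. vpd b \<psi> y j) (vpd i (vpd b \<psi>) x j)"
  using smooth[of x i j "[b]"] by (simp add: vpd_def)

lemma l2: "x \<in> U \<Longrightarrow> i < k \<Longrightarrow> j < m \<Longrightarrow> a < k \<Longrightarrow> b < k \<Longrightarrow> ldx i x (\<lambda>y. vpd a (vpd b \<psi>) y j)"
  using smooth[of x i j "[a,b]"] unfolding vpd2_ipd by (auto intro: ldxI)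

lemma l0: "x \<in> U \<Longrightarrow> i < k \<Longrightarrow> j < m \<Longrightarrow> ldx i x (\<lambda>y. \<psi> y j)"
  using h0 ldxI by blast

lemma l1: "x \<in> U \<Longrightarrow> i < k \<Longrightarrow> j < m \<Longrightarrow> b < k \<Longrightarrow> ldx i x (\<lambda>y. vpd b \<psi> y j)"
  using h1 ldxI by blast

lemma ginv_right: "x \<in> U \<Longrightarrow> a < k \<Longrightarrow> b < k \<Longrightarrow>
   (\<Sum>c<k. gmet m \<psi> x a c * ginv k m \<psi> x c b) = (if a = b then 1 else 0)"
  using ginvP_ginv[OF indep] unfolding ginvP_def by blast

lemma ginv_out: "x \<in> U \<Longrightarrow> k \<le> a \<or> k \<le> b \<Longrightarrow> ginv k m \<psi> x a b = 0"
  using ginvP_ginv[OF indep] unfolding ginvP_def by blast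

lemma ldx_gmet: "x \<in> U \<Longrightarrow> i < k \<Longrightarrow> a < k \<Longrightarrow> b < k \<Longrightarrow> ldx i x (\<lambda>y. gmet m \<psi> y a b)"
  unfolding gmet_def by (intro ldx_cinner l1) auto

lemma ldx_ginv: "x \<in> U \<Longrightarrow> i < k \<Longrightarrow> ldx i x (\<lambda>y. ginv k m \<psi> y a b)"
proof -
  assume x: "x \<in> U" and i: "i < k"
  have "ldx i x (\<lambda>y. invf k (gmet m \<psi> y) a b)"
    apply (rule ldx_invf)
     apply (erule (1) ldx_gmet[OF x i])
    by (rule ginvP_invf(2)[OF indep[OF x]])
  thus ?thesis
    by (rule ldx_cong[OF U_open i x, rotated]) (simp add: ginv_invf[OF indep])
qed

lemma ldx_sff: "x \<in> U \<Longrightarrow> i < k \<Longrightarrow> j < m \<Longrightarrow> a < k \<Longrightarrow> b < k \<Longrightarrow> ldx i x (\<lambda>y. sff k m \<psi> y a b j)"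
  unfolding sff_def nproj_def tanproj_def
  by (intro ldx_diff ldx_sum ldx_mult ldx_of_real ldx_cinner l2 l1 l0 ldx_ginv) auto

lemma ldx_mcurv: "x \<in> U \<Longrightarrow> i < k \<Longrightarrow> j < m \<Longrightarrow> ldx i x (\<lambda>y. mcurv k m \<psi> y j)"
  unfolding mcurv_def
  by (intro ldx_sum ldx_mult ldx_of_real ldx_sff ldx_ginv ldx_const) auto

lemma ldx_JH: "x \<in> U \<Longrightarrow> i < k \<Longrightarrow> ldx i x (\<lambda>y. JHcoord k m \<psi> a y)"
  unfolding JHcoord_def Jc_def
  by (intro ldx_sum ldx_mult ldx_of_real ldx_cinner ldx_mcurv ldx_ginv l1 ldx_const) auto

end

locale legimm = imm +
  assumes leg: "legendrian k m U \<psi>"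
begin

lemma norm1: "x \<in> U \<Longrightarrow> cinner m (\<psi> x) (\<psi> x) = 1"
  using leg unfolding legendrian_def by blast

lemma legJ: "x \<in> U \<Longrightarrow> a < k \<Longrightarrow> cinner m (vpd a \<psi> x) (Jc (\<psi> x)) = 0"
  using leg unfolding legendrian_def by blast

lemma first_order: "x \<in> U \<Longrightarrow> b < k \<Longrightarrow> cinner m (vpd b \<psi> x) (\<psi> x) = 0"
proof -
  assume x: "x \<in> U" and b: "b < k"
  have h: "hlv b x (\<lambda>y. cinner m (\<psi> y) (\<psi> y)) (cinner m (vpd b \<psi> x) (\<psi> x) + cinner m (\<psi> x) (vpd b \<psi> x))"
    by (intro hlv_cinner h0 x b)
  have "hlv b x (\<lambda>y. cinner m (\<psi> y) (\<psi> y)) 0"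
    by (rule hlv_cong[OF U_open b x, of "\<lambda>y. 1"]) (auto simp: norm1)
  with h have "cinner m (vpd b \<psi> x) (\<psi> x) + cinner m (\<psi> x) (vpd b \<psi> x) = 0"
    using hlv_unique by blast
  thus ?thesis using cinner_sym[of m "vpd b \<psi> x" "\<psi> x"] by linarith
qed

lemma second_order: "x \<in> U \<Longrightarrow> a < k \<Longrightarrow> b < k \<Longrightarrow>
   cinner m (vpd a (vpd b \<psi>) x) (\<psi> x) = - gmet m \<psi> x b a"
proof -
  assume x: "x \<in> U" and a: "a < k" and b: "b < k"
  have h: "hlv a x (\<lambda>y. cinner m (vpd b \<psi> y) (\<psi> y)) (cinner m (vpd a (vpd b \<psi>) x) (\<psi> x) + cinner m (vpd b \<psi> x) (vpd a \<psi> x))"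
    by (intro hlv_cinner h0 h1 x a b)
  have "hlv a x (\<lambda>y. cinner m (vpd b \<psi> y) (\<psi> y)) 0"
    by (rule hlv_cong[OF U_open a x, of "\<lambda>y. 0"]) (auto simp: first_order b)
  with h have "cinner m (vpd a (vpd b \<psi>) x) (\<psi> x) + cinner m (vpd b \<psi> x) (vpd a \<psi> x) = 0"
    using hlv_unique by blast
  thus ?thesis unfolding gmet_def by linarith
qed

lemma trace: "x \<in> U \<Longrightarrow> (\<Sum>a<k. \<Sum>b<k. ginv k m \<psi> x a b * gmet m \<psi> x b a) = real k"
proof -
  assume x: "x \<in> U"
  have "(\<Sum>a<k. \<Sum>b<k. ginv k m \<psi> x a b * gmet m \<psi> x b a) = (\<Sum>b<k. \<Sum>a<k. gmet m \<psi> x b a * ginv k m \<psi> x a b)"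
    by (subst sum.swap) (simp add: mult.commute)
  also have "\<dots> = (\<Sum>b<k. 1)" using ginv_right[OF x] by simp
  finally show ?thesis by simp
qed

end

lemma sum_split_add: fixes n1 n2 :: nat shows "(\<Sum>a<n1+n2. f a) = (\<Sum>a<n1. f a) + (\<Sum>b<n2. f (n1 + b))"
  by (induction n2) (auto simp: add.commute add.left_commute)

lemma sum_k: fixes n1 n2 :: nat shows "(\<Sum>a<n1+n2+1. f a) = f 0 + (\<Sum>a<n1. f (Suc a)) + (\<Sum>b<n2. f (Suc (n1 + b)))"
  using sum.lessThan_Suc_shift[of f "n1+n2"] sum_split_add[of "\<lambda>a. f (Suc a)" n1 n2] by (simp add: add.assoc)

lemma sum_m: fixes n1 n2 :: nat shows "(\<Sum>j<n1+n2+2. f j) = (\<Sum>j<n1+1. f j) + (\<Sum>j<n2+1. f (n1 + 1 + j))"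
  using sum_split_add[of f "n1+1" "n2+1"] by (simp add: ac_simps numeral_2_eq_2)

lemma cinner_m: fixes n1 n2 :: nat shows "cinner (n1+n2+2) v w = cinner (n1+1) v w + cinner (n2+1) (\<lambda>j. v (n1+1+j)) (\<lambda>j. w (n1+1+j))"
  unfolding cinner_def by (rule sum_m)

lemma cinner_scal:
  assumes "z * cnj z' = of_real r"
  shows "cinner n (\<lambda>j. z * u j) (\<lambda>j. z' * w j) = r * cinner n u w"
proof -
  have "\<And>j. Re (z * u j * cnj (z' * w j)) = r * Re (u j * cnj (w j))"
  proof -
    fix j
    have "z * u j * cnj (z' * w j) = (z * cnj z') * (u j * cnj (w j))" by (simp add: algebra_simps)
    also have "\<dots> = of_real r * (u j * cnj (w j))" using assms by (simp only:)
    finally have e: "z * u j * cnj (z' * w j) = of_real r * (u j * cnj (w j))" .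
    show "Re (z * u j * cnj (z' * w j)) = r * Re (u j * cnj (w j))" unfolding e by simp
  qed
  thus ?thesis unfolding cinner_def by (simp add: sum_distrib_left)
qed

lemma cinner_zero_left: "cinner n (\<lambda>j. 0) w = 0" and cinner_zero_right: "cinner n w (\<lambda>j. 0) = 0"
  unfolding cinner_def by auto

lemma cont_split1: "continuous_on UNIV (split1 n1)"
  unfolding split1_def
  apply (intro continuous_on_coordinatewise_then_product)
  subgoal for a by (cases "a < n1") (auto intro: continuous_on_product_coordinates)
  done

lemma cont_split2: "continuous_on UNIV (split2 n1 n2)"
  unfolding split2_def
  apply (intro continuous_on_coordinatewise_then_product)
  subgoal for a by (cases "a < n2") (auto intro: continuous_on_product_coordinates)
  done

lemma split1_rn: "split1 n1 x \<in> rn n1" and split2_rn: "split2 n1 n2 x \<in> rn n2"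
  unfolding split1_def split2_def rn_def by auto

lemma split1_upd0: "split1 n1 (y(0:=t)) = split1 n1 y"
  and split2_upd0: "split2 n1 n2 (y(0:=t)) = split2 n1 n2 y"
  unfolding split1_def split2_def by auto

lemma split1_upd1: "a < n1 \<Longrightarrow> split1 n1 (y(Suc a:=t)) = (split1 n1 y)(a:=t)"
  unfolding split1_def by auto

lemma split2_upd1: "a < n1 \<Longrightarrow> split2 n1 n2 (y(Suc a:=t)) = split2 n1 n2 y"
  unfolding split2_def by auto

lemma split1_upd2: "n1 < i \<Longrightarrow> split1 n1 (y(i:=t)) = split1 n1 y"
  unfolding split1_def by auto

lemma split2_upd2: "b < n2 \<Longrightarrow> split2 n1 n2 (y(Suc (n1+b):=t)) = (split2 n1 n2 y)(b:=t)"
  unfolding split2_def by auto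

lemma split2_upd3: "i \<le> n1 \<Longrightarrow> 0 < i \<Longrightarrow> split2 n1 n2 (y(i:=t)) = split2 n1 n2 y"
  unfolding split2_def by auto

lemma split1_at: "a < n1 \<Longrightarrow> split1 n1 y a = y (Suc a)"
  unfolding split1_def by auto

lemma split2_at: "b < n2 \<Longrightarrow> split2 n1 n2 y b = y (Suc (n1 + b))"
  unfolding split2_def by auto

lemma hlv_split1: "a < n1 \<Longrightarrow> hlv a (split1 n1 y) F D \<Longrightarrow> hlv (Suc a) y (\<lambda>z. F (split1 n1 z)) D"
  unfolding hlv_def by (simp add: split1_upd1 split1_at)

lemma hlv_split2: "b < n2 \<Longrightarrow> hlv b (split2 n1 n2 y) F D \<Longrightarrow> hlv (Suc (n1+b)) y (\<lambda>z. F (split2 n1 n2 z)) D"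
  unfolding hlv_def by (simp add: split2_upd2 split2_at)

lemma hlv_E:
  "hlv 0 y (\<lambda>z. exp (\<i> * of_real (A * z 0))) (\<i> * of_real A * exp (\<i> * of_real (A * y 0)))"
proof -
  have "((\<lambda>t. A * t) has_real_derivative A) (at (y 0))"
    by (auto intro!: derivative_eq_intros)
  hence "((\<lambda>t. of_real (A * t) :: complex) has_vector_derivative of_real A) (at (y 0))"
    by (rule has_vector_derivative_of_real)
  hence d: "((\<lambda>t. \<i> * of_real (A * t)) has_vector_derivative \<i> * of_real A) (at (y 0))"
    by (rule has_vector_derivative_mult_right)
  have "((exp \<circ> (\<lambda>t. \<i> * of_real (A * t))) has_vector_derivative (\<i> * of_real A) * exp (\<i> * of_real (A * y 0))) (at (y 0))"
    by (rule field_vector_diff_chain_at[OF d]) (rule DERIV_exp)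
  thus ?thesis unfolding hlv_def by (simp add: o_def)
qed

locale cset =
  fixes n1 n2 :: nat and U1 U2 :: "coord set" and \<psi>1 \<psi>2 :: "coord \<Rightarrow> cvec" and \<delta> :: real
  assumes imm1: "immersion n1 (n1+1) U1 \<psi>1" and leg1: "legendrian n1 (n1+1) U1 \<psi>1"
    and imm2: "immersion n2 (n2+1) U2 \<psi>2" and leg2: "legendrian n2 (n2+1) U2 \<psi>2"
    and d0: "0 < \<delta>" and d1: "\<delta> < pi/2"
begin

sublocale P1: legimm n1 "n1+1" U1 \<psi>1
  by unfold_locales (rule imm1, rule leg1)

sublocale P2: legimm n2 "n2+1" U2 \<psi>2
  by unfold_locales (rule imm2, rule leg2)

definition "cc = cos \<delta>"
definition "ss = sin \<delta>"
definition "AA = sin \<delta> powi (int n1 + 1) * cos \<delta> powi (int n2 - 1)"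
definition "BB = sin \<delta> powi (int n1 - 1) * cos \<delta> powi (int n2 + 1)"
definition "lam = AA^2 * cc^2 + BB^2 * ss^2"
definition "E t = exp (\<i> * of_real (AA * t))"
definition "E2 t = exp (- \<i> * of_real (BB * t))"
abbreviation "\<phi> \<equiv> phi_delta n1 n2 \<delta> \<psi>1 \<psi>2"
abbreviation "D \<equiv> prod_dom n1 n2 U1 U2"
abbreviation "kk \<equiv> n1 + n2 + 1"
abbreviation "mm \<equiv> n1 + n2 + 2"
abbreviation "p \<equiv> split1 n1"
abbreviation "q \<equiv> split2 n1 n2"

lemma cc_pos: "cc > 0" and ss_pos: "ss > 0"
  unfolding cc_def ss_def using d0 d1 by (auto intro!: cos_gt_zero sin_gt_zero)

lemma cs1: "cc^2 + ss^2 = 1"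
  unfolding cc_def ss_def by simp

lemma AA_pos: "AA > 0" and BB_pos: "BB > 0"
  using cc_pos ss_pos unfolding AA_def BB_def cc_def ss_def by auto

lemma lam_pos: "lam > 0"
  unfolding lam_def using AA_pos BB_pos cc_pos ss_pos by (auto intro: add_pos_pos)

lemma AB: "AA * cc^2 = BB * ss^2"
proof -
  have c0: "cc \<noteq> 0" and s0: "ss \<noteq> 0" using cc_pos ss_pos by auto
  have "AA * cc^2 = ss powi (int n1 + 1) * (cc powi (int n2 - 1) * cc powi 2)"
    unfolding AA_def cc_def ss_def by (simp add: power_int_def)
  also have "cc powi (int n2 - 1) * cc powi 2 = cc powi (int n2 + 1)"
    using power_int_add[of cc "int n2 - 1" 2] c0 by (simp add: add.commute)
  also have "ss powi (int n1 + 1) = ss powi (int n1 - 1) * ss powi 2"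
    using power_int_add[of ss "int n1 - 1" 2] s0 by (simp add: add.commute)
  finally show ?thesis unfolding BB_def cc_def ss_def by (simp add: power_int_def mult_ac)
qed

lemma E_unit: "E t * cnj (E t) = 1" and E2_unit: "E2 t * cnj (E2 t) = 1"
  unfolding E_def E2_def
  by (simp_all add: complex_norm_square[symmetric] norm_exp_i_times)

lemma phi_eq: "\<phi> y j = (if j < n1 + 1 then of_real cc * E (y 0) * \<psi>1 (p y) j
   else of_real ss * E2 (y 0) * \<psi>2 (q y) (j - (n1 + 1)))"
  unfolding phi_delta_def E_def E2_def AA_def BB_def cc_def ss_def by simp

lemma D_sub: "D \<subseteq> rn kk"
  unfolding prod_dom_def by auto

lemma D_p: "y \<in> D \<Longrightarrow> p y \<in> U1" and D_q: "y \<in> D \<Longrightarrow> q y \<in> U2"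
  unfolding prod_dom_def by auto

lemma D_open: "openin (top_of_set (rn kk)) D"
proof -
  obtain O1 where O1: "open O1" "U1 = rn n1 \<inter> O1" using P1.U_open by (auto simp: openin_open)
  obtain O2 where O2: "open O2" "U2 = rn n2 \<inter> O2" using P2.U_open by (auto simp: openin_open)
  have "D = rn kk \<inter> (p -` O1 \<inter> q -` O2)"
    unfolding prod_dom_def using O1 O2 split1_rn split2_rn by auto
  moreover have "open (p -` O1 \<inter> q -` O2)"
    using open_vimage[OF O1(1) cont_split1] open_vimage[OF O2(1) cont_split2] by auto
  ultimately show ?thesis by (auto simp: openin_open)
qed

lemma D_upd0: "y \<in> D \<Longrightarrow> y(0:=t) \<in> D"
  unfolding prod_dom_def using rn_upd[of y kk 0 t] by (auto simp: split1_upd0 split2_upd0)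

end

context cset begin

definition Phi1 :: "nat list \<Rightarrow> coord \<Rightarrow> nat \<Rightarrow> complex" where
  "Phi1 ls y j = (if list_all (\<lambda>i. i \<le> n1) ls then of_real cc * (\<i> * of_real AA)^(count_list ls 0) * E (y 0)
      * ipd (map (\<lambda>i. i - 1) (filter (\<lambda>i. i \<noteq> 0) ls)) (\<lambda>z. \<psi>1 z j) (p y) else 0)"

definition Phi2 :: "nat list \<Rightarrow> coord \<Rightarrow> nat \<Rightarrow> complex" where
  "Phi2 ls y j = (if list_all (\<lambda>i. i = 0 \<or> n1 < i) ls then of_real ss * (- \<i> * of_real BB)^(count_list ls 0) * E2 (y 0)
      * ipd (map (\<lambda>i. i - Suc n1) (filter (\<lambda>i. i \<noteq> 0) ls)) (\<lambda>z. \<psi>2 z j) (q y) else 0)"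

lemma hlv_E1: "hlv 0 y (\<lambda>z. E (z 0)) (\<i> * of_real AA * E (y 0))"
  unfolding E_def by (rule hlv_E)

lemma hlv_E2: "hlv 0 y (\<lambda>z. E2 (z 0)) (- \<i> * of_real BB * E2 (y 0))"
  using hlv_E[where A="- BB" and y=y] unfolding E2_def by simp

lemma hlv_Phi1:
  assumes y: "y \<in> D" and i: "i < kk" and ls: "set ls \<subseteq> {..<kk}" and j: "j < n1 + 1"
  shows "hlv i y (\<lambda>z. Phi1 ls z j) (Phi1 (i#ls) y j)"
proof (cases "list_all (\<lambda>i. i \<le> n1) ls")
  case False
  thus ?thesis unfolding Phi1_def by simp
next
  case True
  define ls' where "ls' = map (\<lambda>i. i - 1) (filter (\<lambda>i. i \<noteq> 0) ls)"
  have ls': "set ls' \<subseteq> {..<n1}" using True unfolding ls'_def by (auto simp: list_all_iff)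
  define K where "K = of_real cc * (\<i> * of_real AA)^(count_list ls 0)"
  define g where "g = ipd ls' (\<lambda>z. \<psi>1 z j)"
  have form: "\<And>z. Phi1 ls z j = K * E (z 0) * g (p z)"
    unfolding Phi1_def K_def g_def ls'_def using True by simp
  have py: "p y \<in> U1" using D_p[OF y] .
  consider (z) "i = 0" | (a) a where "i = Suc a" "a < n1" | (b) "n1 < i"
    by (metis Suc_pred' less_Suc_eq_le not_less not_gr_zero)
  thus ?thesis
  proof cases
    case z
    have h1: "hlv 0 y (\<lambda>z. K * E (z 0)) (K * (\<i> * of_real AA * E (y 0)))"
      by (intro hlv_cmult hlv_E1)
    have h2: "hlv 0 y (\<lambda>z. g (p z)) 0"
      by (rule hlv_line_const) (simp add: split1_upd0)
    have "hlv 0 y (\<lambda>z. K * E (z 0) * g (p z)) (K * E (y 0) * 0 + K * (\<i> * of_real AA * E (y 0)) * g (p y))"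
      by (rule hlv_mult[OF h1 h2])
    moreover have "Phi1 (0#ls) y j = K * (\<i> * of_real AA * E (y 0)) * g (p y)"
      unfolding Phi1_def K_def g_def ls'_def using True by simp
    ultimately show ?thesis using z form by simp
  next
    case a
    have h1: "hlv i y (\<lambda>z. K * E (z 0)) 0"
      by (rule hlv_line_const) (simp add: a)
    have "hlv a (p y) g (ipd (a#ls') (\<lambda>z. \<psi>1 z j) (p y))"
      unfolding g_def by (rule P1.smooth[OF py a(2) j ls'])
    hence h2: "hlv i y (\<lambda>z. g (p z)) (ipd (a#ls') (\<lambda>z. \<psi>1 z j) (p y))"
      using hlv_split1[OF a(2)] a(1) by blast
    have "hlv i y (\<lambda>z. K * E (z 0) * g (p z)) (K * E (y 0) * ipd (a#ls') (\<lambda>z. \<psi>1 z j) (p y) + 0 * g (p y))"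
      by (rule hlv_mult[OF h1 h2])
    moreover have "Phi1 (i#ls) y j = K * E (y 0) * ipd (a#ls') (\<lambda>z. \<psi>1 z j) (p y)"
      unfolding Phi1_def K_def ls'_def using True a by simp
    ultimately show ?thesis using form by simp
  next
    case b
    have "hlv i y (\<lambda>z. Phi1 ls z j) 0"
      by (rule hlv_line_const[where K="Phi1 ls y j"]) (use b in \<open>simp add: form split1_upd2\<close>)
    moreover have "Phi1 (i#ls) y j = 0" unfolding Phi1_def using b by simp
    ultimately show ?thesis by simp
  qed
qed

lemma hlv_Phi2:
  assumes y: "y \<in> D" and i: "i < kk" and ls: "set ls \<subseteq> {..<kk}" and j: "j < n2 + 1"
  shows "hlv i y (\<lambda>z. Phi2 ls z j) (Phi2 (i#ls) y j)"
proof (cases "list_all (\<lambda>i. i = 0 \<or> n1 < i) ls")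
  case False
  thus ?thesis unfolding Phi2_def by simp
next
  case True
  define ls' where "ls' = map (\<lambda>i. i - Suc n1) (filter (\<lambda>i. i \<noteq> 0) ls)"
  have "\<forall>x\<in>set ls. x \<noteq> 0 \<longrightarrow> x - Suc n1 < n2"
  proof (intro ballI impI)
    fix x assume "x \<in> set ls" "x \<noteq> 0"
    hence "n1 < x" "x < Suc (n1+n2)" using True ls by (auto simp: list_all_iff)
    thus "x - Suc n1 < n2" by linarith
  qed
  hence ls': "set ls' \<subseteq> {..<n2}" unfolding ls'_def by auto
  define K where "K = of_real ss * (- \<i> * of_real BB)^(count_list ls 0)"
  define g where "g = ipd ls' (\<lambda>z. \<psi>2 z j)"
  have form: "\<And>z. Phi2 ls z j = K * E2 (z 0) * g (q z)"
    unfolding Phi2_def K_def g_def ls'_def using True by simp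
  have qy: "q y \<in> U2" using D_q[OF y] .
  consider (z) "i = 0" | (a) "0 < i" "i \<le> n1" | (b) b where "i = Suc (n1 + b)" "b < n2"
    using i by (metis add_Suc_right add_diff_inverse_nat less_Suc_eq_0_disj less_diff_conv2 not_less not_less_eq_eq
       add.commute plus_1_eq_Suc gr0I)
  thus ?thesis
  proof cases
    case z
    have h1: "hlv 0 y (\<lambda>z. K * E2 (z 0)) (K * (- \<i> * of_real BB * E2 (y 0)))"
      by (intro hlv_cmult hlv_E2)
    have h2: "hlv 0 y (\<lambda>z. g (q z)) 0"
      by (rule hlv_line_const) (simp add: split2_upd0)
    have "hlv 0 y (\<lambda>z. K * E2 (z 0) * g (q z)) (K * E2 (y 0) * 0 + K * (- \<i> * of_real BB * E2 (y 0)) * g (q y))"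
      by (rule hlv_mult[OF h1 h2])
    moreover have "Phi2 (0#ls) y j = K * (- \<i> * of_real BB * E2 (y 0)) * g (q y)"
      unfolding Phi2_def K_def g_def ls'_def using True by simp
    ultimately show ?thesis using z form by simp
  next
    case a
    have "hlv i y (\<lambda>z. Phi2 ls z j) 0"
      by (rule hlv_line_const[where K="Phi2 ls y j"]) (use a in \<open>simp add: form split2_upd3\<close>)
    moreover have "Phi2 (i#ls) y j = 0" unfolding Phi2_def using a by simp
    ultimately show ?thesis by simp
  next
    case b
    have h1: "hlv i y (\<lambda>z. K * E2 (z 0)) 0"
      by (rule hlv_line_const) (simp add: b)
    have "hlv b (q y) g (ipd (b#ls') (\<lambda>z. \<psi>2 z j) (q y))"
      unfolding g_def by (rule P2.smooth[OF qy b(2) j ls'])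
    hence h2: "hlv i y (\<lambda>z. g (q z)) (ipd (b#ls') (\<lambda>z. \<psi>2 z j) (q y))"
      using hlv_split2[OF b(2)] b(1) by blast
    have "hlv i y (\<lambda>z. K * E2 (z 0) * g (q z)) (K * E2 (y 0) * ipd (b#ls') (\<lambda>z. \<psi>2 z j) (q y) + 0 * g (q y))"
      by (rule hlv_mult[OF h1 h2])
    moreover have "Phi2 (i#ls) y j = K * E2 (y 0) * ipd (b#ls') (\<lambda>z. \<psi>2 z j) (q y)"
      unfolding Phi2_def K_def ls'_def using True b by simp
    ultimately show ?thesis using form by simp
  qed
qed

definition PhiF :: "nat list \<Rightarrow> coord \<Rightarrow> nat \<Rightarrow> complex" where
  "PhiF ls y j = (if j < n1 + 1 then Phi1 ls y j else Phi2 ls y (j - (n1 + 1)))"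

lemma hlv_PhiF:
  assumes "y \<in> D" "i < kk" "set ls \<subseteq> {..<kk}" "j < mm"
  shows "hlv i y (\<lambda>z. PhiF ls z j) (PhiF (i#ls) y j)"
  using hlv_Phi1[OF assms(1-3)] hlv_Phi2[OF assms(1-3), of "j - (n1+1)"] assms(4)
  unfolding PhiF_def by (cases "j < n1 + 1") auto

lemma ipd_phi:
  assumes "j < mm"
  shows "y \<in> D \<Longrightarrow> set ls \<subseteq> {..<kk} \<Longrightarrow> ipd ls (\<lambda>z. \<phi> z j) y = PhiF ls y j"
proof (induction ls arbitrary: y)
  case Nil
  show ?case unfolding PhiF_def Phi1_def Phi2_def by (simp add: phi_eq)
next
  case (Cons i ls)
  have i: "i < kk" and ls: "set ls \<subseteq> {..<kk}" using Cons.prems by auto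
  have "ipd (i#ls) (\<lambda>z. \<phi> z j) y = pd i (ipd ls (\<lambda>z. \<phi> z j)) y" by simp
  also have "\<dots> = pd i (\<lambda>z. PhiF ls z j) y"
    by (rule pd_cong[OF D_open i Cons.prems(1)]) (use Cons.IH ls in auto)
  also have "\<dots> = PhiF (i#ls) y j"
    by (rule hlv_pd[OF hlv_PhiF[OF Cons.prems(1) i ls assms]])
  finally show ?case .
qed

end

context cset begin

definition bv :: "real \<Rightarrow> cvec \<Rightarrow> cvec \<Rightarrow> cvec" where
  "bv t u w = (\<lambda>j. if j < n1 + 1 then of_real cc * E t * u j else of_real ss * E2 t * w (j - (n1 + 1)))"

definition eqm :: "cvec \<Rightarrow> cvec \<Rightarrow> bool" where
  "eqm v w \<longleftrightarrow> (\<forall>j<mm. v j = w j)"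

lemma cinner_eqm: "eqm v v' \<Longrightarrow> eqm w w' \<Longrightarrow> cinner mm v w = cinner mm v' w'"
  unfolding eqm_def by (rule cinner_cong) auto

lemma cinner_bv: "cinner mm (bv t u w) (bv t u' w') = cc^2 * cinner (n1+1) u u' + ss^2 * cinner (n2+1) w w'"
proof -
  have 1: "cinner (n1+1) (bv t u w) (bv t u' w') = cinner (n1+1) (\<lambda>j. (of_real cc * E t) * u j) (\<lambda>j. (of_real cc * E t) * u' j)"
    by (rule cinner_cong) (auto simp: bv_def)
  have 2: "cinner (n2+1) (\<lambda>j. bv t u w (n1+1+j)) (\<lambda>j. bv t u' w' (n1+1+j)) =
       cinner (n2+1) (\<lambda>j. (of_real ss * E2 t) * w j) (\<lambda>j. (of_real ss * E2 t) * w' j)"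
    by (rule cinner_cong) (auto simp: bv_def)
  have e1: "(of_real cc * E t) * cnj (of_real cc * E t) = of_real (cc^2)"
    using E_unit[of t] by (simp add: power2_eq_square mult_ac)
  have e2: "(of_real ss * E2 t) * cnj (of_real ss * E2 t) = of_real (ss^2)"
    using E2_unit[of t] by (simp add: power2_eq_square mult_ac)
  show ?thesis
    unfolding cinner_m 1 2 cinner_scal[OF e1] cinner_scal[OF e2] ..
qed

lemma Jc_bv: "Jc (bv t u w) = bv t (Jc u) (Jc w)"
  unfolding Jc_def bv_def by (auto simp: mult_ac)

lemma bv_zero: "eqm (bv t u w) (\<lambda>j. 0) \<Longrightarrow> (\<forall>j<n1+1. u j = 0) \<and> (\<forall>j<n2+1. w j = 0)"
proof -
  assume h: "eqm (bv t u w) (\<lambda>j. 0)"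
  have c: "of_real cc * E t \<noteq> 0" using cc_pos unfolding E_def by simp
  have s: "of_real ss * E2 t \<noteq> 0" using ss_pos unfolding E2_def by simp
  have "\<forall>j<n1+1. u j = 0"
  proof (intro allI impI)
    fix j assume "j < n1+1"
    hence "of_real cc * E t * u j = 0" using h unfolding eqm_def bv_def by (auto dest!: spec[of _ j])
    thus "u j = 0" using c by simp
  qed
  moreover have "\<forall>j<n2+1. w j = 0"
  proof (intro allI impI)
    fix j assume "j < n2+1"
    hence "of_real ss * E2 t * w j = 0" using h unfolding eqm_def bv_def by (auto dest!: spec[of _ "n1+1+j"])
    thus "w j = 0" using s by simp
  qed
  ultimately show ?thesis by blast
qed

lemma bv_sum: "(\<Sum>a\<in>A. of_real (r a) * bv t (u a) (w a) j) = bv t (\<lambda>j. \<Sum>a\<in>A. of_real (r a) * u a j) (\<lambda>j. \<Sum>a\<in>A. of_real (r a) * w a j) j"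
  unfolding bv_def by (auto simp: sum_distrib_left mult_ac)

lemma bv_add: "bv t u w j + bv t u' w' j = bv t (\<lambda>j. u j + u' j) (\<lambda>j. w j + w' j) j"
  unfolding bv_def by (auto simp: algebra_simps)

lemma bv_diff: "bv t u w j - bv t u' w' j = bv t (\<lambda>j. u j - u' j) (\<lambda>j. w j - w' j) j"
  unfolding bv_def by (auto simp: algebra_simps)

lemma bv_scale: "of_real r * bv t u w j = bv t (\<lambda>j. of_real r * u j) (\<lambda>j. of_real r * w j) j"
  unfolding bv_def by (auto simp: algebra_simps)

lemma bv_cmult: "z * bv t u w j = bv t (\<lambda>j. z * u j) (\<lambda>j. z * w j) j"
  unfolding bv_def by (auto simp: algebra_simps)

lemma phi_bv: "\<phi> y = bv (y 0) (\<psi>1 (p y)) (\<psi>2 (q y))"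
  unfolding bv_def by (rule ext) (simp add: phi_eq)

lemma vpd_ipd_phi: "y \<in> D \<Longrightarrow> j < mm \<Longrightarrow> set ls \<subseteq> {..<kk} \<Longrightarrow> ipd ls (\<lambda>z. \<phi> z j) y = PhiF ls y j"
  using ipd_phi by blast

lemma vpd_phi0: "y \<in> D \<Longrightarrow> eqm (vpd 0 \<phi> y) (bv (y 0) (\<lambda>j. \<i> * of_real AA * \<psi>1 (p y) j) (\<lambda>j. - \<i> * of_real BB * \<psi>2 (q y) j))"
  unfolding eqm_def vpd1_ipd
  by (auto simp: vpd_ipd_phi PhiF_def Phi1_def Phi2_def bv_def mult_ac simp del: ipd.simps(2))

lemma vpd_phi1: "y \<in> D \<Longrightarrow> a < n1 \<Longrightarrow> eqm (vpd (Suc a) \<phi> y) (bv (y 0) (vpd a \<psi>1 (p y)) (\<lambda>j. 0))"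
  unfolding eqm_def vpd1_ipd
  by (auto simp: vpd_ipd_phi PhiF_def Phi1_def Phi2_def bv_def mult_ac simp del: ipd.simps(2))

lemma vpd_phi2: "y \<in> D \<Longrightarrow> b < n2 \<Longrightarrow> eqm (vpd (Suc (n1+b)) \<phi> y) (bv (y 0) (\<lambda>j. 0) (vpd b \<psi>2 (q y)))"
  unfolding eqm_def vpd1_ipd
  by (auto simp: vpd_ipd_phi PhiF_def Phi1_def Phi2_def bv_def mult_ac simp del: ipd.simps(2))

lemma vpd2_phi00: "y \<in> D \<Longrightarrow> eqm (vpd 0 (vpd 0 \<phi>) y) (bv (y 0) (\<lambda>j. - of_real (AA^2) * \<psi>1 (p y) j) (\<lambda>j. - of_real (BB^2) * \<psi>2 (q y) j))"
  unfolding eqm_def vpd2_ipd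
  by (auto simp: vpd_ipd_phi PhiF_def Phi1_def Phi2_def bv_def mult_ac power2_eq_square simp del: ipd.simps(2))

lemma vpd2_phi11: "y \<in> D \<Longrightarrow> a < n1 \<Longrightarrow> b < n1 \<Longrightarrow>
   eqm (vpd (Suc a) (vpd (Suc b) \<phi>) y) (bv (y 0) (vpd a (vpd b \<psi>1) (p y)) (\<lambda>j. 0))"
  unfolding eqm_def vpd2_ipd
  by (auto simp: vpd_ipd_phi PhiF_def Phi1_def Phi2_def bv_def mult_ac simp del: ipd.simps(2))

lemma vpd2_phi22: "y \<in> D \<Longrightarrow> a < n2 \<Longrightarrow> b < n2 \<Longrightarrow>
   eqm (vpd (Suc (n1+a)) (vpd (Suc (n1+b)) \<phi>) y) (bv (y 0) (\<lambda>j. 0) (vpd a (vpd b \<psi>2) (q y)))"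
  unfolding eqm_def vpd2_ipd
  by (auto simp: vpd_ipd_phi PhiF_def Phi1_def Phi2_def bv_def mult_ac simp del: ipd.simps(2))

end

context cset begin

lemma eqm_at1: "eqm v (bv t u w) \<Longrightarrow> j < n1 + 1 \<Longrightarrow> v j = of_real cc * E t * u j"
  unfolding eqm_def bv_def by auto

lemma eqm_at2: "eqm v (bv t u w) \<Longrightarrow> j < n2 + 1 \<Longrightarrow> v (n1 + 1 + j) = of_real ss * E2 t * w j"
  unfolding eqm_def bv_def by auto

lemma cont_y0: "continuous_on S (\<lambda>y::coord. y 0)"
  by (rule continuous_on_subset[OF continuous_on_product_coordinates]) auto

lemma cont_PhiF: "j < mm \<Longrightarrow> set ls \<subseteq> {..<kk} \<Longrightarrow> continuous_on D (\<lambda>y. PhiF ls y j)"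
proof -
  assume j: "j < mm" and ls: "set ls \<subseteq> {..<kk}"
  have cE: "continuous_on D (\<lambda>y. E (y 0))" unfolding E_def
    by (intro continuous_intros cont_y0)
  have cE2: "continuous_on D (\<lambda>y. E2 (y 0))" unfolding E2_def
    by (intro continuous_intros cont_y0)
  have cp: "continuous_on D p" by (rule continuous_on_subset[OF cont_split1]) auto
  have cq: "continuous_on D q" by (rule continuous_on_subset[OF cont_split2]) auto
  show ?thesis
  proof (cases "j < n1 + 1")
    case True
    define ls' where "ls' = map (\<lambda>i. i - 1) (filter (\<lambda>i. i \<noteq> 0) ls)"
    define C where "C = list_all (\<lambda>i. i \<le> n1) ls"
    define K where "K = of_real cc * (\<i> * of_real AA)^(count_list ls 0)"
    have g: "C \<Longrightarrow> continuous_on D (\<lambda>y. ipd ls' (\<lambda>z. \<psi>1 z j) (p y))"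
      unfolding C_def ls'_def
      by (intro continuous_on_compose2[OF P1.smooth_cont cp]) (use True D_p in \<open>auto simp: list_all_iff\<close>)
    have e: "(\<lambda>y. PhiF ls y j) = (\<lambda>y. if C then K * E (y 0) * ipd ls' (\<lambda>z. \<psi>1 z j) (p y) else 0)"
      unfolding PhiF_def Phi1_def C_def K_def ls'_def using True by simp
    show ?thesis unfolding e by (cases C) (auto intro!: continuous_intros cE g)
  next
    case False
    define ls' where "ls' = map (\<lambda>i. i - Suc n1) (filter (\<lambda>i. i \<noteq> 0) ls)"
    define C where "C = list_all (\<lambda>i. i = 0 \<or> n1 < i) ls"
    define K where "K = of_real ss * (- \<i> * of_real BB)^(count_list ls 0)"
    have j2: "j - (n1+1) < n2 + 1" using j False by simp
    have g: "C \<Longrightarrow> set ls \<subseteq> {..<kk} \<Longrightarrow> continuous_on D (\<lambda>y. ipd ls' (\<lambda>z. \<psi>2 z (j - (n1+1))) (q y))"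
    proof -
      assume C: C and ls: "set ls \<subseteq> {..<kk}"
      have "\<forall>x\<in>set ls. x \<noteq> 0 \<longrightarrow> x - Suc n1 < n2"
      proof (intro ballI impI)
        fix x assume "x \<in> set ls" "x \<noteq> 0"
        hence "n1 < x" "x < Suc (n1+n2)" using C ls by (auto simp: list_all_iff C_def)
        thus "x - Suc n1 < n2" by linarith
      qed
      hence "set ls' \<subseteq> {..<n2}" unfolding ls'_def by auto
      thus ?thesis
        by (intro continuous_on_compose2[OF P2.smooth_cont[OF j2] cq]) (use D_q in auto)
    qed
    have e: "(\<lambda>y. PhiF ls y j) = (\<lambda>y. if C then K * E2 (y 0) * ipd ls' (\<lambda>z. \<psi>2 z (j - (n1+1))) (q y) else 0)"
      unfolding PhiF_def Phi2_def C_def K_def ls'_def using False by simp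
    have g': "C \<Longrightarrow> continuous_on D (\<lambda>y. ipd ls' (\<lambda>z. \<psi>2 z (j - (n1+1))) (q y))" using g ls by blast
    show ?thesis
    proof (cases C)
      case True
      show ?thesis unfolding e using True by (simp only: if_True) (intro continuous_intros cE2 g' True)
    next
      case False
      show ?thesis unfolding e using False by simp
    qed
  qed
qed

lemma smooth_phi: assumes j: "j < mm" shows "smooth_on kk D (\<lambda>x. \<phi> x j)"
  unfolding smooth_on_def
proof (intro allI impI conjI ballI)
  fix ls assume ls: "set ls \<subseteq> {..<kk}"
  have eq: "\<And>y. y \<in> D \<Longrightarrow> PhiF ls y j = ipd ls (\<lambda>x. \<phi> x j) y"
    using ipd_phi[OF j _ ls] by simp
  show "continuous_on D (ipd ls (\<lambda>x. \<phi> x j))"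
    using cont_PhiF[OF j ls] continuous_on_cong[OF refl, of D "\<lambda>y. PhiF ls y j" "ipd ls (\<lambda>x. \<phi> x j)"] eq
    by blast
  fix i x assume i: "i < kk" and x: "x \<in> D"
  show "(\<lambda>t. ipd ls (\<lambda>x. \<phi> x j) (x(i := t))) differentiable at (x i)"
    by (rule hlv_diff_of[OF hlv_cong[OF D_open i x eq hlv_PhiF[OF x i ls j]]])
qed

lemma i_scal: "\<i> * of_real r * cnj \<i> = (of_real r :: complex)"
  by (simp add: algebra_simps)
lemma i_scal2: "- \<i> * of_real r * cnj \<i> = (of_real (- r) :: complex)"
  by (simp add: algebra_simps)
lemma i_scal3: "\<i> * cnj \<i> = (1 :: complex)"
  by (simp add: algebra_simps)

lemma immersion_iff: "immersion k m U \<phi>' \<longleftrightarrow> U \<subseteq> rn k \<and> openin (top_of_set (rn k)) U \<and>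
     (\<forall>j<m. smooth_on k U (\<lambda>x. \<phi>' x j)) \<and> (\<forall>x\<in>U. indep k m \<phi>' x)"
  unfolding immersion_def indep_def ..

lemma idx_cases: "a < kk \<Longrightarrow> a = 0 \<or> (\<exists>a'. a = Suc a' \<and> a' < n1) \<or> (\<exists>b. a = Suc (n1 + b) \<and> b < n2)"
proof -
  assume a: "a < kk"
  show ?thesis
  proof (cases a)
    case (Suc a')
    show ?thesis
    proof (cases "a' < n1")
      case False
      hence "a = Suc (n1 + (a' - n1)) \<and> a' - n1 < n2" using a Suc by auto
      thus ?thesis by blast
    qed (use Suc in auto)
  qed simp
qed

lemma d0_1: "y \<in> D \<Longrightarrow> j < n1 + 1 \<Longrightarrow> vpd 0 \<phi> y j = of_real cc * E (y 0) * (\<i> * of_real AA * \<psi>1 (p y) j)"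
  using eqm_at1[OF vpd_phi0] by blast
lemma d0_2: "y \<in> D \<Longrightarrow> j < n2 + 1 \<Longrightarrow> vpd 0 \<phi> y (n1 + 1 + j) = of_real ss * E2 (y 0) * (- \<i> * of_real BB * \<psi>2 (q y) j)"
  using eqm_at2[OF vpd_phi0] by blast
lemma d1_1: "y \<in> D \<Longrightarrow> a < n1 \<Longrightarrow> j < n1 + 1 \<Longrightarrow> vpd (Suc a) \<phi> y j = of_real cc * E (y 0) * vpd a \<psi>1 (p y) j"
  using eqm_at1[OF vpd_phi1] by blast
lemma d1_2: "y \<in> D \<Longrightarrow> a < n1 \<Longrightarrow> j < n2 + 1 \<Longrightarrow> vpd (Suc a) \<phi> y (n1 + 1 + j) = 0"
  using eqm_at2[OF vpd_phi1] by fastforce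
lemma d2_1: "y \<in> D \<Longrightarrow> b < n2 \<Longrightarrow> j < n1 + 1 \<Longrightarrow> vpd (Suc (n1 + b)) \<phi> y j = 0"
  using eqm_at1[OF vpd_phi2] by fastforce
lemma d2_2: "y \<in> D \<Longrightarrow> b < n2 \<Longrightarrow> j < n2 + 1 \<Longrightarrow> vpd (Suc (n1 + b)) \<phi> y (n1 + 1 + j) = of_real ss * E2 (y 0) * vpd b \<psi>2 (q y) j"
  using eqm_at2[OF vpd_phi2] by blast

lemma indep_phi: assumes y: "y \<in> D" shows "indep kk mm \<phi> y"
  unfolding indep_def
proof (rule allI, rule impI)
  fix c :: "nat \<Rightarrow> real"
  assume h: "\<forall>j<mm. (\<Sum>a<kk. of_real (c a) * vpd a \<phi> y j) = 0"
  define W1 where "W1 j = of_real (c 0) * (\<i> * of_real AA * \<psi>1 (p y) j) + (\<Sum>a<n1. of_real (c (Suc a)) * vpd a \<psi>1 (p y) j)" for j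
  define W2 where "W2 j = of_real (c 0) * (- \<i> * of_real BB * \<psi>2 (q y) j) + (\<Sum>b<n2. of_real (c (Suc (n1 + b))) * vpd b \<psi>2 (q y) j)" for j
  have cE: "of_real cc * E (y 0) \<noteq> 0" using cc_pos unfolding E_def by simp
  have sE: "of_real ss * E2 (y 0) \<noteq> 0" using ss_pos unfolding E2_def by simp
  have W1z: "W1 j = 0" if j: "j < n1 + 1" for j
  proof -
    have s2: "(\<Sum>b<n2. of_real (c (Suc (n1+b))) * vpd (Suc (n1+b)) \<phi> y j) = 0"
      by (rule sum.neutral, intro ballI) (simp add: d2_1[OF y _ j])
    have s1: "(\<Sum>a<n1. of_real (c (Suc a)) * vpd (Suc a) \<phi> y j) = (\<Sum>a<n1. of_real (c (Suc a)) * (of_real cc * E (y 0) * vpd a \<psi>1 (p y) j))"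
      by (rule sum.cong) (simp_all add: d1_1[OF y _ j])
    have "(\<Sum>a<kk. of_real (c a) * vpd a \<phi> y j) = of_real cc * E (y 0) * W1 j"
      unfolding sum_k s1 s2 d0_1[OF y j] W1_def by (simp add: sum_distrib_left algebra_simps)
    moreover have "(\<Sum>a<kk. of_real (c a) * vpd a \<phi> y j) = 0" using h j by simp
    ultimately show ?thesis using cE by simp
  qed
  have W2z: "W2 j = 0" if j: "j < n2 + 1" for j
  proof -
    have s1: "(\<Sum>a<n1. of_real (c (Suc a)) * vpd (Suc a) \<phi> y (n1 + 1 + j)) = 0"
      by (rule sum.neutral, intro ballI) (simp add: d1_2[OF y _ j, simplified])
    have s2: "(\<Sum>b<n2. of_real (c (Suc (n1+b))) * vpd (Suc (n1+b)) \<phi> y (n1 + 1 + j)) = (\<Sum>b<n2. of_real (c (Suc (n1+b))) * (of_real ss * E2 (y 0) * vpd b \<psi>2 (q y) j))"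
      by (rule sum.cong) (simp_all add: d2_2[OF y _ j, simplified])
    have "(\<Sum>a<kk. of_real (c a) * vpd a \<phi> y (n1 + 1 + j)) = of_real ss * E2 (y 0) * W2 j"
      unfolding sum_k s1 s2 d0_2[OF y j] W2_def by (simp add: sum_distrib_left algebra_simps)
    moreover have "(\<Sum>a<kk. of_real (c a) * vpd a \<phi> y (n1 + 1 + j)) = 0" using h j by simp
    ultimately show ?thesis using sE by simp
  qed
  have py: "p y \<in> U1" using D_p[OF y] .
  have qy: "q y \<in> U2" using D_q[OF y] .
  have "cinner (n1+1) W1 (Jc (\<psi>1 (p y))) = 0"
    using cinner_cong[of "n1+1" W1 "\<lambda>j. 0" "Jc (\<psi>1 (p y))" "Jc (\<psi>1 (p y))"] W1z cinner_zero_left by simp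
  moreover have "cinner (n1+1) W1 (Jc (\<psi>1 (p y))) = c 0 * AA"
  proof -
    have e: "\<i> * of_real AA * cnj \<i> = of_real AA" by (rule i_scal)
    have 1: "cinner (n1+1) (\<lambda>j. \<i> * of_real AA * \<psi>1 (p y) j) (Jc (\<psi>1 (p y))) = AA"
      unfolding Jc_def cinner_scal[OF e] using P1.norm1[OF py] by simp
    have 2: "cinner (n1+1) (\<lambda>j. \<Sum>a<n1. of_real (c (Suc a)) * vpd a \<psi>1 (p y) j) (Jc (\<psi>1 (p y))) = 0"
      by (simp add: cinner_sum_left cinner_scale_left, rule sum.neutral) (simp add: P1.legJ[OF py, simplified])
    show ?thesis unfolding W1_def cinner_add_left cinner_scale_left 1 2 by simp
  qed
  ultimately have c0: "c 0 = 0" using AA_pos by simp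
  have c1: "\<forall>a<n1. c (Suc a) = 0"
  proof -
    have "\<forall>j<n1+1. (\<Sum>a<n1. of_real (c (Suc a)) * vpd a \<psi>1 (p y) j) = 0"
      using W1z c0 unfolding W1_def by simp
    thus ?thesis using mp[OF spec[OF P1.indep[OF py, unfolded indep_def], of "\<lambda>a. c (Suc a)"]] by simp
  qed
  have c2: "\<forall>b<n2. c (Suc (n1 + b)) = 0"
  proof -
    have "\<forall>j<n2+1. (\<Sum>b<n2. of_real (c (Suc (n1 + b))) * vpd b \<psi>2 (q y) j) = 0"
      using W2z c0 unfolding W2_def by simp
    thus ?thesis using mp[OF spec[OF P2.indep[OF qy, unfolded indep_def], of "\<lambda>b. c (Suc (n1 + b))"]] by simp
  qed
  show "\<forall>a<kk. c a = 0"
  proof (intro allI impI)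
    fix a assume a: "a < kk"
    show "c a = 0"
    proof (cases "a = 0")
      case True thus ?thesis using c0 by simp
    next
      case False
      then obtain a' where a': "a = Suc a'" by (cases a) auto
      show ?thesis
      proof (cases "a' < n1")
        case True thus ?thesis using c1 a' by simp
      next
        case False
        define b where "b = a' - n1"
        have "a' = n1 + b" "b < n2" using a a' False unfolding b_def by auto
        thus ?thesis using c2 a' by simp
      qed
    qed
  qed
qed

lemma immersion_phi: "immersion kk mm D \<phi>"
  unfolding immersion_iff using D_sub D_open smooth_phi indep_phi by blast

lemma legendrian_phi: "legendrian kk mm D \<phi>"
  unfolding legendrian_def
proof (intro ballI conjI allI impI)
  fix y assume y: "y \<in> D"
  have py: "p y \<in> U1" using D_p[OF y] .
  have qy: "q y \<in> U2" using D_q[OF y] .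
  show "cinner mm (\<phi> y) (\<phi> y) = 1"
    unfolding phi_bv cinner_bv using P1.norm1[OF py] P2.norm1[OF qy] cs1 by simp
  fix a assume a: "a < kk"
  have J: "eqm (Jc (\<phi> y)) (bv (y 0) (Jc (\<psi>1 (p y))) (Jc (\<psi>2 (q y))))"
    unfolding phi_bv Jc_bv eqm_def by simp
  consider "a = 0" | a' where "a = Suc a'" "a' < n1" | b where "a = Suc (n1 + b)" "b < n2"
    using idx_cases[OF a] by blast
  thus "cinner mm (vpd a \<phi> y) (Jc (\<phi> y)) = 0"
  proof cases
    case 1
    have e1: "\<i> * of_real AA * cnj \<i> = of_real AA" by (rule i_scal)
    have e2: "- \<i> * of_real BB * cnj \<i> = of_real (- BB)" by (rule i_scal2)
    have "cinner mm (vpd a \<phi> y) (Jc (\<phi> y)) = cc\<^sup>2 * cinner (n1 + 1) (\<lambda>j. \<i> * complex_of_real AA * \<psi>1 (p y) j) (Jc (\<psi>1 (p y))) +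
      ss\<^sup>2 * cinner (n2 + 1) (\<lambda>j. - \<i> * complex_of_real BB * \<psi>2 (q y) j) (Jc (\<psi>2 (q y)))"
      unfolding 1 cinner_eqm[OF vpd_phi0[OF y] J] cinner_bv ..
    also have "\<dots> = cc\<^sup>2 * AA - ss\<^sup>2 * BB"
      unfolding Jc_def cinner_scal[OF e1] cinner_scal[OF e2] using P1.norm1[OF py] P2.norm1[OF qy] by simp
    finally show ?thesis using AB by (simp add: mult.commute)
  next
    case (2 a')
    show ?thesis unfolding 2 cinner_eqm[OF vpd_phi1[OF y 2(2)] J] cinner_bv
      using P1.legJ[OF py 2(2)] by (simp add: cinner_zero_left)
  next
    case (3 b)
    show ?thesis unfolding 3 cinner_eqm[OF vpd_phi2[OF y 3(2)] J] cinner_bv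
      using P2.legJ[OF qy 3(2)] by (simp add: cinner_zero_left)
  qed
qed

end

context cset begin

definition bf :: "real \<Rightarrow> (nat \<Rightarrow> nat \<Rightarrow> real) \<Rightarrow> (nat \<Rightarrow> nat \<Rightarrow> real) \<Rightarrow> nat \<Rightarrow> nat \<Rightarrow> real" where
  "bf \<alpha> M1 M2 a b = (if a = 0 \<and> b = 0 then \<alpha>
     else if 0 < a \<and> a \<le> n1 \<and> 0 < b \<and> b \<le> n1 then M1 (a - 1) (b - 1)
     else if n1 < a \<and> a < kk \<and> n1 < b \<and> b < kk then M2 (a - Suc n1) (b - Suc n1) else 0)"

lemma bf_00[simp]: "bf \<alpha> M1 M2 0 0 = \<alpha>"
  and bf_01[simp]: "bf \<alpha> M1 M2 0 (Suc a) = 0"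
  and bf_10[simp]: "bf \<alpha> M1 M2 (Suc a) 0 = 0"
  unfolding bf_def by auto

lemma bf_11[simp]: "a < n1 \<Longrightarrow> b < n1 \<Longrightarrow> bf \<alpha> M1 M2 (Suc a) (Suc b) = M1 a b"
  and bf_12[simp]: "a < n1 \<Longrightarrow> bf \<alpha> M1 M2 (Suc a) (Suc (n1 + b)) = 0"
  and bf_21[simp]: "a < n1 \<Longrightarrow> bf \<alpha> M1 M2 (Suc (n1 + b)) (Suc a) = 0"
  and bf_22[simp]: "a < n2 \<Longrightarrow> b < n2 \<Longrightarrow> bf \<alpha> M1 M2 (Suc (n1 + a)) (Suc (n1 + b)) = M2 a b"
  unfolding bf_def by auto

lemma bf_out: "kk \<le> a \<or> kk \<le> b \<Longrightarrow> bf \<alpha> M1 M2 a b = 0"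
  unfolding bf_def by auto

lemma sbf0: "(\<Sum>c<kk. bf \<alpha> M1 M2 0 c * F c) = \<alpha> * F 0"
  unfolding sum_k by simp

lemma sbf1: "a < n1 \<Longrightarrow> (\<Sum>c<kk. bf \<alpha> M1 M2 (Suc a) c * F c) = (\<Sum>c<n1. M1 a c * F (Suc c))"
  unfolding sum_k by (simp add: sum.neutral)

lemma sbf2: "a < n2 \<Longrightarrow> (\<Sum>c<kk. bf \<alpha> M1 M2 (Suc (n1 + a)) c * F c) = (\<Sum>c<n2. M2 a c * F (Suc (n1 + c)))"
  unfolding sum_k by (simp add: sum.neutral)

lemma dsbf: "(\<Sum>a<kk. \<Sum>b<kk. bf \<alpha> M1 M2 a b * F a b) =
   \<alpha> * F 0 0 + (\<Sum>a<n1. \<Sum>b<n1. M1 a b * F (Suc a) (Suc b)) + (\<Sum>a<n2. \<Sum>b<n2. M2 a b * F (Suc (n1 + a)) (Suc (n1 + b)))"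
proof -
  have 1: "(\<Sum>a<n1. \<Sum>b<kk. bf \<alpha> M1 M2 (Suc a) b * F (Suc a) b) = (\<Sum>a<n1. \<Sum>b<n1. M1 a b * F (Suc a) (Suc b))"
    by (rule sum.cong[OF refl], rule sbf1, simp)
  have 2: "(\<Sum>a<n2. \<Sum>b<kk. bf \<alpha> M1 M2 (Suc (n1+a)) b * F (Suc (n1+a)) b) = (\<Sum>a<n2. \<Sum>b<n2. M2 a b * F (Suc (n1 + a)) (Suc (n1 + b)))"
    by (rule sum.cong[OF refl], rule sbf2, simp)
  show ?thesis unfolding sum_k[of "\<lambda>a. \<Sum>b<kk. bf \<alpha> M1 M2 a b * F a b"] 1 2 sbf0 by simp
qed

end

context cset begin

lemmas cinner_bvs = cinner_bv[simplified]

lemma cinner_iJ: "cinner n (\<lambda>j. \<i> * of_real r * u j) w = r * cinner n w (Jc u)"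
proof -
  have "(\<lambda>j. \<i> * of_real r * u j) = (\<lambda>j. of_real r * Jc u j)" by (auto simp: Jc_def mult_ac)
  thus ?thesis using cinner_sym cinner_scale_left by metis
qed

lemma cinner_miJ: "cinner n (\<lambda>j. - \<i> * of_real r * u j) w = - r * cinner n w (Jc u)"
proof -
  have "(\<lambda>j. - \<i> * of_real r * u j) = (\<lambda>j. of_real (- r) * Jc u j)" by (auto simp: Jc_def mult_ac)
  thus ?thesis using cinner_sym cinner_scale_left by metis
qed

lemma iscal_sq: "\<i> * of_real r * cnj (\<i> * of_real r) = of_real (r^2)"
  and miscal_sq: "- \<i> * of_real r * cnj (- \<i> * of_real r) = of_real (r^2)"
  by (simp_all add: algebra_simps power2_eq_square)

lemma g_00: "y \<in> D \<Longrightarrow> gmet mm \<phi> y 0 0 = lam"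
proof -
  assume y: "y \<in> D"
  have py: "p y \<in> U1" and qy: "q y \<in> U2" using D_p[OF y] D_q[OF y] .
  show ?thesis unfolding gmet_def cinner_eqm[OF vpd_phi0[OF y] vpd_phi0[OF y]] cinner_bv
      cinner_scal[OF iscal_sq] cinner_scal[OF miscal_sq]
    using P1.norm1[OF py] P2.norm1[OF qy] by (simp add: lam_def mult_ac)
qed

lemma g_01: "y \<in> D \<Longrightarrow> a < n1 \<Longrightarrow> gmet mm \<phi> y 0 (Suc a) = 0"
  and g_10: "y \<in> D \<Longrightarrow> a < n1 \<Longrightarrow> gmet mm \<phi> y (Suc a) 0 = 0"
proof -
  assume y: "y \<in> D" and a: "a < n1"
  have py: "p y \<in> U1" using D_p[OF y] .
  show "gmet mm \<phi> y 0 (Suc a) = 0" unfolding gmet_def cinner_eqm[OF vpd_phi0[OF y] vpd_phi1[OF y a]] cinner_bv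
      cinner_iJ cinner_miJ using P1.legJ[OF py a] by (simp add: cinner_zero_left cinner_zero_right)
  thus "gmet mm \<phi> y (Suc a) 0 = 0" unfolding gmet_def using cinner_sym by metis
qed

lemma g_02: "y \<in> D \<Longrightarrow> b < n2 \<Longrightarrow> gmet mm \<phi> y 0 (Suc (n1 + b)) = 0"
  and g_20: "y \<in> D \<Longrightarrow> b < n2 \<Longrightarrow> gmet mm \<phi> y (Suc (n1 + b)) 0 = 0"
proof -
  assume y: "y \<in> D" and b: "b < n2"
  have qy: "q y \<in> U2" using D_q[OF y] .
  show "gmet mm \<phi> y 0 (Suc (n1 + b)) = 0" unfolding gmet_def cinner_eqm[OF vpd_phi0[OF y] vpd_phi2[OF y b]] cinner_bv
      cinner_iJ cinner_miJ using P2.legJ[OF qy b] by (simp add: cinner_zero_left cinner_zero_right)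
  thus "gmet mm \<phi> y (Suc (n1 + b)) 0 = 0" unfolding gmet_def using cinner_sym by metis
qed

lemma g_11: "y \<in> D \<Longrightarrow> a < n1 \<Longrightarrow> b < n1 \<Longrightarrow> gmet mm \<phi> y (Suc a) (Suc b) = cc^2 * gmet (n1+1) \<psi>1 (p y) a b"
  unfolding gmet_def by (subst cinner_eqm[OF vpd_phi1 vpd_phi1], assumption+) (simp add: cinner_bvs cinner_zero_left)

lemma g_22: "y \<in> D \<Longrightarrow> a < n2 \<Longrightarrow> b < n2 \<Longrightarrow> gmet mm \<phi> y (Suc (n1+a)) (Suc (n1+b)) = ss^2 * gmet (n2+1) \<psi>2 (q y) a b"
  unfolding gmet_def by (subst cinner_eqm[OF vpd_phi2 vpd_phi2], assumption+) (simp add: cinner_bvs cinner_zero_left)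

lemma g_12: "y \<in> D \<Longrightarrow> a < n1 \<Longrightarrow> b < n2 \<Longrightarrow> gmet mm \<phi> y (Suc a) (Suc (n1+b)) = 0"
  and g_21: "y \<in> D \<Longrightarrow> a < n1 \<Longrightarrow> b < n2 \<Longrightarrow> gmet mm \<phi> y (Suc (n1+b)) (Suc a) = 0"
  unfolding gmet_def
   apply (subst cinner_eqm[OF vpd_phi1 vpd_phi2], assumption+, simp add: cinner_bvs cinner_zero_left cinner_zero_right)
  apply (subst cinner_eqm[OF vpd_phi2 vpd_phi1], assumption+, simp add: cinner_bvs cinner_zero_left cinner_zero_right)
  done

definition "gphi y = bf lam (\<lambda>a b. cc^2 * gmet (n1+1) \<psi>1 (p y) a b) (\<lambda>a b. ss^2 * gmet (n2+1) \<psi>2 (q y) a b)"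
definition "Gphi y = bf (1/lam) (\<lambda>a b. ginv n1 (n1+1) \<psi>1 (p y) a b / cc^2) (\<lambda>a b. ginv n2 (n2+1) \<psi>2 (q y) a b / ss^2)"

lemma gmet_phi: "y \<in> D \<Longrightarrow> a < kk \<Longrightarrow> b < kk \<Longrightarrow> gmet mm \<phi> y a b = gphi y a b"
  unfolding gphi_def
  using idx_cases[of a] idx_cases[of b]
  by (auto simp: g_00[simplified] g_01[simplified] g_10[simplified] g_02[simplified] g_20[simplified]
     g_11[simplified] g_22[simplified] g_12[simplified] g_21[simplified])


lemma Gphi_out: "kk \<le> a \<or> kk \<le> b \<Longrightarrow> Gphi y a b = 0"
  unfolding Gphi_def by (rule bf_out)

lemma ginvP_phi: assumes y: "y \<in> D" shows "ginvP kk mm \<phi> y (Gphi y)"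
  unfolding ginvP_def
proof (intro conjI allI impI)
  fix a b assume "kk \<le> a \<or> kk \<le> b"
  thus "Gphi y a b = 0" by (rule Gphi_out)
next
  fix a b assume a: "a < kk" and b: "b < kk"
  have py: "p y \<in> U1" and qy: "q y \<in> U2" using D_p[OF y] D_q[OF y] .
  have c0: "cc^2 \<noteq> 0" "ss^2 \<noteq> 0" using cc_pos ss_pos by auto
  have "(\<Sum>c<kk. gmet mm \<phi> y a c * Gphi y c b) = (\<Sum>c<kk. gphi y a c * Gphi y c b)"
    by (rule sum.cong[OF refl]) (simp only: gmet_phi[OF y a] lessThan_iff)
  also have "\<dots> = (if a = b then 1 else 0)"
  proof -
    consider "a = 0" | a' where "a = Suc a'" "a' < n1" | a' where "a = Suc (n1 + a')" "a' < n2"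
      using idx_cases[OF a] by blast
    thus ?thesis
    proof cases
      case 1
      show ?thesis unfolding 1 gphi_def sbf0 using idx_cases[OF b] lam_pos
        by (auto simp: Gphi_def)
    next
      case 2
      have "(\<Sum>c<kk. gphi y a c * Gphi y c b) = (\<Sum>c<n1. cc^2 * gmet (n1+1) \<psi>1 (p y) a' c * Gphi y (Suc c) b)"
        unfolding 2 gphi_def sbf1[OF 2(2)] ..
      also have "\<dots> = (if a = b then 1 else 0)"
      proof -
        consider "b = 0" | b' where "b = Suc b'" "b' < n1" | b' where "b = Suc (n1 + b')" "b' < n2"
          using idx_cases[OF b] by blast
        thus ?thesis
        proof cases
          case 1 thus ?thesis using 2 by (simp add: Gphi_def)
        next
          case (2 b')
          have "(\<Sum>c<n1. cc^2 * gmet (n1+1) \<psi>1 (p y) a' c * Gphi y (Suc c) b) =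
              (\<Sum>c<n1. gmet (n1+1) \<psi>1 (p y) a' c * ginv n1 (n1+1) \<psi>1 (p y) c b')"
            by (intro sum.cong refl) (use 2 c0 in \<open>simp add: Gphi_def\<close>)
          also have "\<dots> = (if a' = b' then 1 else 0)" by (rule P1.ginv_right[OF py \<open>a' < n1\<close> 2(2)])
          finally show ?thesis using 2 \<open>a = Suc a'\<close> by simp
        next
          case 3 thus ?thesis using 2 by (simp add: Gphi_def)
        qed
      qed
      finally show ?thesis .
    next
      case 3
      have "(\<Sum>c<kk. gphi y a c * Gphi y c b) = (\<Sum>c<n2. ss^2 * gmet (n2+1) \<psi>2 (q y) a' c * Gphi y (Suc (n1 + c)) b)"
        unfolding 3 gphi_def sbf2[OF 3(2)] ..
      also have "\<dots> = (if a = b then 1 else 0)"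
      proof -
        consider "b = 0" | b' where "b = Suc b'" "b' < n1" | b' where "b = Suc (n1 + b')" "b' < n2"
          using idx_cases[OF b] by blast
        thus ?thesis
        proof cases
          case 1 thus ?thesis using 3 by (simp add: Gphi_def)
        next
          case 2 thus ?thesis using 3 by (simp add: Gphi_def)
        next
          case (3 b')
          have "(\<Sum>c<n2. ss^2 * gmet (n2+1) \<psi>2 (q y) a' c * Gphi y (Suc (n1 + c)) b) =
              (\<Sum>c<n2. gmet (n2+1) \<psi>2 (q y) a' c * ginv n2 (n2+1) \<psi>2 (q y) c b')"
            by (intro sum.cong refl) (use 3 c0 in \<open>simp add: Gphi_def\<close>)
          also have "\<dots> = (if a' = b' then 1 else 0)" by (rule P2.ginv_right[OF qy \<open>a' < n2\<close> 3(2)])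
          finally show ?thesis using 3 \<open>a = Suc (n1 + a')\<close> by simp
        qed
      qed
      finally show ?thesis .
    qed
  qed
  finally show "(\<Sum>c<kk. gmet mm \<phi> y a c * Gphi y c b) = (if a = b then 1 else 0)" .
qed

lemma ginv_phi: "y \<in> D \<Longrightarrow> ginv kk mm \<phi> y = Gphi y"
  using ginv_eq[OF indep_phi ginvP_phi] by blast

end

lemma tanproj_sum: "finite A \<Longrightarrow> tanproj k m \<phi> x (\<lambda>j. \<Sum>a\<in>A. W a j) j = (\<Sum>a\<in>A. tanproj k m \<phi> x (W a) j)"
  unfolding tanproj_def
  by (simp add: cinner_sum_left sum_distrib_left sum_distrib_right sum.swap[of _ A])

lemma tanproj_scale: "tanproj k m \<phi> x (\<lambda>j. of_real r * W j) j = of_real r * tanproj k m \<phi> x W j"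
  unfolding tanproj_def by (simp add: cinner_scale_left sum_distrib_left mult_ac)

lemma nproj_sum: "finite A \<Longrightarrow> nproj k m \<phi> x (\<lambda>j. \<Sum>a\<in>A. W a j) j = (\<Sum>a\<in>A. nproj k m \<phi> x (W a) j)"
  unfolding nproj_def tanproj_sum
  by (simp add: cinner_sum_left sum_subtractf sum_distrib_right)

lemma nproj_scale: "nproj k m \<phi> x (\<lambda>j. of_real r * W j) j = of_real r * nproj k m \<phi> x W j"
  unfolding nproj_def tanproj_scale by (simp add: cinner_scale_left algebra_simps)

definition Vtr :: "nat \<Rightarrow> nat \<Rightarrow> (coord \<Rightarrow> cvec) \<Rightarrow> coord \<Rightarrow> cvec" where
  "Vtr k m \<phi> x = (\<lambda>j. \<Sum>a<k. \<Sum>b<k. of_real (ginv k m \<phi> x a b) * vpd a (vpd b \<phi>) x j)"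

lemma mcurv_Vtr: "mcurv k m \<phi> x j = of_real (1 / real k) * nproj k m \<phi> x (Vtr k m \<phi> x) j"
proof -
  have "nproj k m \<phi> x (Vtr k m \<phi> x) j = (\<Sum>a<k. \<Sum>b<k. of_real (ginv k m \<phi> x a b) * sff k m \<phi> x a b j)"
    unfolding Vtr_def nproj_sum[OF finite_lessThan] nproj_scale sff_def ..
  thus ?thesis unfolding mcurv_def by simp
qed

context cset begin

lemma sbf0c: "(\<Sum>c<kk. of_real (bf \<alpha> M1 M2 0 c) * F c) = of_real \<alpha> * (F 0 :: complex)"
  unfolding sum_k by simp

lemma sbf1c: "a < n1 \<Longrightarrow> (\<Sum>c<kk. of_real (bf \<alpha> M1 M2 (Suc a) c) * F c) = (\<Sum>c<n1. of_real (M1 a c) * (F (Suc c) :: complex))"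
  unfolding sum_k by (simp add: sum.neutral)

lemma sbf2c: "a < n2 \<Longrightarrow> (\<Sum>c<kk. of_real (bf \<alpha> M1 M2 (Suc (n1 + a)) c) * F c) = (\<Sum>c<n2. of_real (M2 a c) * (F (Suc (n1 + c)) :: complex))"
  unfolding sum_k by (simp add: sum.neutral)

lemma dsbfc: "(\<Sum>a<kk. \<Sum>b<kk. of_real (bf \<alpha> M1 M2 a b) * F a b) =
   of_real \<alpha> * F 0 0 + (\<Sum>a<n1. \<Sum>b<n1. of_real (M1 a b) * F (Suc a) (Suc b))
     + (\<Sum>a<n2. \<Sum>b<n2. of_real (M2 a b) * (F (Suc (n1 + a)) (Suc (n1 + b)) :: complex))"
proof -
  have 1: "(\<Sum>a<n1. \<Sum>b<kk. of_real (bf \<alpha> M1 M2 (Suc a) b) * F (Suc a) b) = (\<Sum>a<n1. \<Sum>b<n1. of_real (M1 a b) * F (Suc a) (Suc b))"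
    by (rule sum.cong[OF refl], rule sbf1c, simp)
  have 2: "(\<Sum>a<n2. \<Sum>b<kk. of_real (bf \<alpha> M1 M2 (Suc (n1+a)) b) * F (Suc (n1+a)) b) = (\<Sum>a<n2. \<Sum>b<n2. of_real (M2 a b) * F (Suc (n1 + a)) (Suc (n1 + b)))"
    by (rule sum.cong[OF refl], rule sbf2c, simp)
  show ?thesis unfolding sum_k[of "\<lambda>a. \<Sum>b<kk. of_real (bf \<alpha> M1 M2 a b) * F a b"] 1 2 sbf0c by simp
qed

abbreviation "G1 y \<equiv> ginv n1 (n1+1) \<psi>1 (p y)"
abbreviation "G2 y \<equiv> ginv n2 (n2+1) \<psi>2 (q y)"
abbreviation "tan1 y \<equiv> tanproj n1 (n1+1) \<psi>1 (p y)"
abbreviation "tan2 y \<equiv> tanproj n2 (n2+1) \<psi>2 (q y)"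

lemma cinner_v0: "y \<in> D \<Longrightarrow> eqm v (bv (y 0) u w) \<Longrightarrow> cinner mm v (vpd 0 \<phi> y) =
   cc^2 * cinner (n1+1) u (\<lambda>j. \<i> * of_real AA * \<psi>1 (p y) j) + ss^2 * cinner (n2+1) w (\<lambda>j. - \<i> * of_real BB * \<psi>2 (q y) j)"
  using cinner_eqm[OF _ vpd_phi0] cinner_bv by metis

lemma cinner_v1: "y \<in> D \<Longrightarrow> b < n1 \<Longrightarrow> eqm v (bv (y 0) u w) \<Longrightarrow> cinner mm v (vpd (Suc b) \<phi> y) = cc^2 * cinner (n1+1) u (vpd b \<psi>1 (p y))"
  using cinner_eqm[OF _ vpd_phi1] cinner_bv cinner_zero_right by (metis add.right_neutral mult_zero_right)

lemma cinner_v2: "y \<in> D \<Longrightarrow> b < n2 \<Longrightarrow> eqm v (bv (y 0) u w) \<Longrightarrow> cinner mm v (vpd (Suc (n1+b)) \<phi> y) = ss^2 * cinner (n2+1) w (vpd b \<psi>2 (q y))"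
  using cinner_eqm[OF _ vpd_phi2] cinner_bv cinner_zero_right by (metis add.left_neutral mult_zero_right)


definition "beta0 y u w = cc^2 * cinner (n1+1) u (\<lambda>j. \<i> * of_real AA * \<psi>1 (p y) j) + ss^2 * cinner (n2+1) w (\<lambda>j. - \<i> * of_real BB * \<psi>2 (q y) j)"

lemma tanproj_Gphi: "y \<in> D \<Longrightarrow> tanproj kk mm \<phi> y v j =
   (\<Sum>a<kk. \<Sum>b<kk. of_real (Gphi y a b) * (of_real (cinner mm v (vpd b \<phi> y)) * vpd a \<phi> y j))"
  by (simp only: tanproj_def ginv_phi of_real_mult mult.assoc)

lemma tan_bv1:
  assumes y: "y \<in> D" and v: "eqm v (bv (y 0) u w)" and j: "j < n1 + 1"
  shows "tanproj kk mm \<phi> y v j = of_real cc * E (y 0) * (of_real (beta0 y u w / lam) * (\<i> * of_real AA * \<psi>1 (p y) j) + tan1 y u j)"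
proof -
  have c0: "cc \<noteq> 0" using cc_pos by simp
  have b1: "(\<Sum>a<n1. \<Sum>b<n1. of_real (G1 y a b / cc^2) * (of_real (cinner mm v (vpd (Suc b) \<phi> y)) * vpd (Suc a) \<phi> y j))
      = (\<Sum>a<n1. \<Sum>b<n1. of_real cc * E (y 0) * (of_real (G1 y a b * cinner (n1+1) u (vpd b \<psi>1 (p y))) * vpd a \<psi>1 (p y) j))"
    by (intro sum.cong refl) (simp add: cinner_v1[OF y _ v, simplified] d1_1[OF y _ j] c0 power2_eq_square)
  have b2: "(\<Sum>a<n2. \<Sum>b<n2. of_real (G2 y a b / ss^2) * (of_real (cinner mm v (vpd (Suc (n1+b)) \<phi> y)) * vpd (Suc (n1+a)) \<phi> y j)) = 0"
    by (intro sum.neutral ballI) (simp add: d2_1[OF y _ j])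
  show ?thesis
    unfolding tanproj_Gphi[OF y] Gphi_def dsbfc b1 b2 cinner_v0[OF y v] d0_1[OF y j] beta0_def[symmetric]
    by (simp add: tanproj_def sum_distrib_left algebra_simps)
qed

lemma tan_bv2:
  assumes y: "y \<in> D" and v: "eqm v (bv (y 0) u w)" and j: "j < n2 + 1"
  shows "tanproj kk mm \<phi> y v (n1 + 1 + j) = of_real ss * E2 (y 0) * (of_real (beta0 y u w / lam) * (- \<i> * of_real BB * \<psi>2 (q y) j) + tan2 y w j)"
proof -
  have c0: "ss \<noteq> 0" using ss_pos by simp
  have b1: "(\<Sum>a<n1. \<Sum>b<n1. of_real (G1 y a b / cc^2) * (of_real (cinner mm v (vpd (Suc b) \<phi> y)) * vpd (Suc a) \<phi> y (n1 + 1 + j))) = 0"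
    by (intro sum.neutral ballI) (simp add: d1_2[OF y _ j, simplified])
  have b2: "(\<Sum>a<n2. \<Sum>b<n2. of_real (G2 y a b / ss^2) * (of_real (cinner mm v (vpd (Suc (n1+b)) \<phi> y)) * vpd (Suc (n1+a)) \<phi> y (n1 + 1 + j)))
      = (\<Sum>a<n2. \<Sum>b<n2. of_real ss * E2 (y 0) * (of_real (G2 y a b * cinner (n2+1) w (vpd b \<psi>2 (q y))) * vpd a \<psi>2 (q y) j))"
    by (intro sum.cong refl) (simp add: cinner_v2[OF y _ v, simplified] d2_2[OF y _ j, simplified] c0 power2_eq_square)
  show ?thesis
    unfolding tanproj_Gphi[OF y] Gphi_def dsbfc b1 b2 cinner_v0[OF y v] d0_2[OF y j] beta0_def[symmetric]
    by (simp add: tanproj_def sum_distrib_left algebra_simps)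
qed

end

context cset begin

definition "rho0 y u w = cc^2 * cinner (n1+1) u (\<psi>1 (p y)) + ss^2 * cinner (n2+1) w (\<psi>2 (q y))"

lemma cinner_vphi: "eqm v (bv (y 0) u w) \<Longrightarrow> cinner mm v (\<phi> y) = rho0 y u w"
  unfolding rho0_def using cinner_eqm[of v "bv (y 0) u w" "\<phi> y" "\<phi> y"] cinner_bv phi_bv
  by (metis eqm_def)

lemma nproj_bv1:
  assumes y: "y \<in> D" and v: "eqm v (bv (y 0) u w)" and j: "j < n1 + 1"
  shows "nproj kk mm \<phi> y v j = of_real cc * E (y 0) *
     (u j - (of_real (beta0 y u w / lam) * (\<i> * of_real AA * \<psi>1 (p y) j) + tan1 y u j) - of_real (rho0 y u w) * \<psi>1 (p y) j)"
proof -
  have vj: "v j = of_real cc * E (y 0) * u j" using eqm_at1[OF v j] .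
  have pj: "\<phi> y j = of_real cc * E (y 0) * \<psi>1 (p y) j" using j by (simp add: phi_eq)
  show ?thesis unfolding nproj_def tan_bv1[OF y v j] cinner_vphi[of v y u w, OF v] vj pj
    by (simp add: algebra_simps)
qed

lemma nproj_bv2:
  assumes y: "y \<in> D" and v: "eqm v (bv (y 0) u w)" and j: "j < n2 + 1"
  shows "nproj kk mm \<phi> y v (n1 + 1 + j) = of_real ss * E2 (y 0) *
     (w j - (of_real (beta0 y u w / lam) * (- \<i> * of_real BB * \<psi>2 (q y) j) + tan2 y w j) - of_real (rho0 y u w) * \<psi>2 (q y) j)"
proof -
  have vj: "v (n1 + 1 + j) = of_real ss * E2 (y 0) * w j" using eqm_at2[OF v j] .
  have pj: "\<phi> y (n1 + 1 + j) = of_real ss * E2 (y 0) * \<psi>2 (q y) j" by (simp add: phi_eq)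
  show ?thesis unfolding nproj_def tan_bv2[OF y v j] cinner_vphi[of v y u w, OF v] vj pj
    by (simp add: algebra_simps)
qed

lemma nproj_bv:
  assumes y: "y \<in> D" and v: "eqm v (bv (y 0) u w)"
  shows "eqm (nproj kk mm \<phi> y v) (bv (y 0)
     (\<lambda>j. u j - (of_real (beta0 y u w / lam) * (\<i> * of_real AA * \<psi>1 (p y) j) + tan1 y u j) - of_real (rho0 y u w) * \<psi>1 (p y) j)
     (\<lambda>j. w j - (of_real (beta0 y u w / lam) * (- \<i> * of_real BB * \<psi>2 (q y) j) + tan2 y w j) - of_real (rho0 y u w) * \<psi>2 (q y) j))"
  unfolding eqm_def
proof (intro allI impI)
  fix j assume j: "j < mm"
  show "nproj kk mm \<phi> y v j = bv (y 0)
     (\<lambda>j. u j - (of_real (beta0 y u w / lam) * (\<i> * of_real AA * \<psi>1 (p y) j) + tan1 y u j) - of_real (rho0 y u w) * \<psi>1 (p y) j)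
     (\<lambda>j. w j - (of_real (beta0 y u w / lam) * (- \<i> * of_real BB * \<psi>2 (q y) j) + tan2 y w j) - of_real (rho0 y u w) * \<psi>2 (q y) j) j"
  proof (cases "j < n1 + 1")
    case True
    show ?thesis unfolding nproj_bv1[OF y v True] bv_def using True by simp
  next
    case False
    define j' where "j' = j - (n1 + 1)"
    have jj: "j = n1 + 1 + j'" "j' < n2 + 1" using False j unfolding j'_def by auto
    show ?thesis unfolding jj(1) nproj_bv2[OF y v jj(2)] bv_def by simp
  qed
qed

abbreviation "V1 y \<equiv> Vtr n1 (n1+1) \<psi>1 (p y)"
abbreviation "V2 y \<equiv> Vtr n2 (n2+1) \<psi>2 (q y)"
definition "W1 y = (\<lambda>j. of_real (- (AA^2) / lam) * \<psi>1 (p y) j + of_real (1 / cc^2) * V1 y j)"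
definition "W2 y = (\<lambda>j. of_real (- (BB^2) / lam) * \<psi>2 (q y) j + of_real (1 / ss^2) * V2 y j)"

lemma Vtr_Gphi: "y \<in> D \<Longrightarrow> Vtr kk mm \<phi> y j = (\<Sum>a<kk. \<Sum>b<kk. of_real (Gphi y a b) * vpd a (vpd b \<phi>) y j)"
  by (simp only: Vtr_def ginv_phi)

lemma Vtr_phi: assumes y: "y \<in> D" shows "eqm (Vtr kk mm \<phi> y) (bv (y 0) (W1 y) (W2 y))"
  unfolding eqm_def
proof (intro allI impI)
  fix j assume j: "j < mm"
  have c0: "cc \<noteq> 0" "ss \<noteq> 0" using cc_pos ss_pos by auto
  show "Vtr kk mm \<phi> y j = bv (y 0) (W1 y) (W2 y) j"
  proof (cases "j < n1 + 1")
    case True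
    have b1: "(\<Sum>a<n1. \<Sum>b<n1. of_real (G1 y a b / cc^2) * vpd (Suc a) (vpd (Suc b) \<phi>) y j)
      = (\<Sum>a<n1. \<Sum>b<n1. of_real cc * E (y 0) * (of_real (1 / cc^2) * (of_real (G1 y a b) * vpd a (vpd b \<psi>1) (p y) j)))"
      by (intro sum.cong refl) (simp add: eqm_at1[OF vpd2_phi11[OF y] True])
    have b2: "(\<Sum>a<n2. \<Sum>b<n2. of_real (G2 y a b / ss^2) * vpd (Suc (n1+a)) (vpd (Suc (n1+b)) \<phi>) y j) = 0"
      by (intro sum.neutral ballI) (simp add: eqm_at1[OF vpd2_phi22[OF y] True])
    show ?thesis
      unfolding Vtr_Gphi[OF y] Gphi_def dsbfc b1 b2 eqm_at1[OF vpd2_phi00[OF y] True]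
      using True by (simp add: bv_def W1_def Vtr_def sum_distrib_left algebra_simps)
  next
    case False
    define j' where "j' = j - (n1 + 1)"
    have jj: "j = n1 + 1 + j'" "j' < n2 + 1" using False j unfolding j'_def by auto
    have b1: "(\<Sum>a<n1. \<Sum>b<n1. of_real (G1 y a b / cc^2) * vpd (Suc a) (vpd (Suc b) \<phi>) y (n1 + 1 + j')) = 0"
      by (intro sum.neutral ballI) (simp add: eqm_at2[OF vpd2_phi11[OF y] jj(2), simplified])
    have b2: "(\<Sum>a<n2. \<Sum>b<n2. of_real (G2 y a b / ss^2) * vpd (Suc (n1+a)) (vpd (Suc (n1+b)) \<phi>) y (n1 + 1 + j'))
      = (\<Sum>a<n2. \<Sum>b<n2. of_real ss * E2 (y 0) * (of_real (1 / ss^2) * (of_real (G2 y a b) * vpd a (vpd b \<psi>2) (q y) j')))"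
      by (intro sum.cong refl) (simp add: eqm_at2[OF vpd2_phi22[OF y] jj(2), simplified])
    show ?thesis
      unfolding jj(1) Vtr_Gphi[OF y] Gphi_def dsbfc b1 b2 eqm_at2[OF vpd2_phi00[OF y] jj(2)]
      by (simp add: bv_def W2_def Vtr_def sum_distrib_left algebra_simps)
  qed
qed

end

lemma cJ_add: "cinner n (Jc (\<lambda>j. X j + Y j)) w = cinner n (Jc X) w + cinner n (Jc Y) w"
  unfolding Jc_def by (simp add: distrib_left cinner_add_left)

lemma cJ_diff: "cinner n (Jc (\<lambda>j. X j - Y j)) w = cinner n (Jc X) w - cinner n (Jc Y) w"
  unfolding Jc_def by (simp add: right_diff_distrib cinner_diff_left)

lemma cJ_scale: "cinner n (Jc (\<lambda>j. of_real r * X j)) w = r * cinner n (Jc X) w"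
proof -
  have "Jc (\<lambda>j. of_real r * X j) = (\<lambda>j. of_real r * Jc X j)" unfolding Jc_def by (auto simp: mult_ac)
  thus ?thesis by (simp add: cinner_scale_left)
qed

lemma cJ_iscale: "cinner n (Jc (\<lambda>j. \<i> * of_real r * X j)) w = - r * cinner n X w"
proof -
  have "Jc (\<lambda>j. \<i> * of_real r * X j) = (\<lambda>j. of_real (- r) * X j)" unfolding Jc_def
  proof (rule ext)
    fix j
    have "\<i> * (\<i> * of_real r * X j) = (\<i> * \<i>) * (of_real r * X j)" by (simp only: mult_ac)
    thus "\<i> * (\<i> * of_real r * X j) = of_real (- r) * X j" by simp
  qed
  thus ?thesis using cinner_scale_left[of n "- r" X w] by simp
qed

lemma tanproj_add: "tanproj k m \<phi> x (\<lambda>j. X j + Y j) j = tanproj k m \<phi> x X j + tanproj k m \<phi> x Y j"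
  unfolding tanproj_def by (simp add: cinner_add_left algebra_simps sum.distrib)

lemma tanproj_diff: "tanproj k m \<phi> x (\<lambda>j. X j - Y j) j = tanproj k m \<phi> x X j - tanproj k m \<phi> x Y j"
  unfolding tanproj_def by (simp add: cinner_diff_left algebra_simps sum_subtractf)

context legimm begin

lemma cJ_psi: "x \<in> U \<Longrightarrow> c < k \<Longrightarrow> cinner m (Jc (\<psi> x)) (vpd c \<psi> x) = 0"
  using legJ cinner_sym by metis

lemma c_psi: "x \<in> U \<Longrightarrow> c < k \<Longrightarrow> cinner m (\<psi> x) (vpd c \<psi> x) = 0"
  using first_order cinner_sym by metis

lemma tan_psi: "x \<in> U \<Longrightarrow> tanproj k m \<psi> x (\<psi> x) j = 0"
  unfolding tanproj_def by (intro sum.neutral ballI) (simp add: c_psi)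

lemma mcurv_fun: "mcurv k m \<psi> x = (\<lambda>j. of_real (1 / real k) * nproj k m \<psi> x (Vtr k m \<psi> x) j)"
  by (rule ext) (rule mcurv_Vtr)

lemma L_mcurv: "x \<in> U \<Longrightarrow> c < k \<Longrightarrow> cinner m (Jc (mcurv k m \<psi> x)) (vpd c \<psi> x) =
   (1 / real k) * (cinner m (Jc (Vtr k m \<psi> x)) (vpd c \<psi> x) - cinner m (Jc (tanproj k m \<psi> x (Vtr k m \<psi> x))) (vpd c \<psi> x))"
  unfolding mcurv_fun cJ_scale nproj_def cJ_diff
  by (simp add: cJ_psi)

end

context cset begin

definition "P1 y = (\<lambda>j. W1 y j - (of_real (beta0 y (W1 y) (W2 y) / lam) * (\<i> * of_real AA * \<psi>1 (p y) j) + tan1 y (W1 y) j)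
    - of_real (rho0 y (W1 y) (W2 y)) * \<psi>1 (p y) j)"
definition "P2 y = (\<lambda>j. W2 y j - (of_real (beta0 y (W1 y) (W2 y) / lam) * (- \<i> * of_real BB * \<psi>2 (q y) j) + tan2 y (W2 y) j)
    - of_real (rho0 y (W1 y) (W2 y)) * \<psi>2 (q y) j)"

lemma mcurv_phi: assumes y: "y \<in> D"
  shows "eqm (mcurv kk mm \<phi> y) (bv (y 0) (\<lambda>j. of_real (1 / real kk) * P1 y j) (\<lambda>j. of_real (1 / real kk) * P2 y j))"
  unfolding eqm_def
proof (intro allI impI)
  fix j assume j: "j < mm"
  have "mcurv kk mm \<phi> y j = of_real (1 / real kk) * nproj kk mm \<phi> y (Vtr kk mm \<phi> y) j" by (rule mcurv_Vtr)
  also have "nproj kk mm \<phi> y (Vtr kk mm \<phi> y) j = bv (y 0) (P1 y) (P2 y) j"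
    using nproj_bv[OF y Vtr_phi[OF y]] j unfolding eqm_def P1_def P2_def by blast
  finally have "mcurv kk mm \<phi> y j = of_real (1 / real kk) * bv (y 0) (P1 y) (P2 y) j" .
  thus "mcurv kk mm \<phi> y j = bv (y 0) (\<lambda>j. of_real (1 / real kk) * P1 y j) (\<lambda>j. of_real (1 / real kk) * P2 y j) j"
    unfolding bv_scale .
qed

definition "J1 y = Jc (\<lambda>j. of_real (1 / real kk) * P1 y j)"
definition "J2 y = Jc (\<lambda>j. of_real (1 / real kk) * P2 y j)"

lemma Jmc: "y \<in> D \<Longrightarrow> eqm (Jc (mcurv kk mm \<phi> y)) (bv (y 0) (J1 y) (J2 y))"
  using mcurv_phi unfolding eqm_def J1_def J2_def Jc_bv[symmetric] by (auto simp: Jc_def)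

lemma JH_Gphi: "y \<in> D \<Longrightarrow> JHcoord kk mm \<phi> a y = (\<Sum>b<kk. Gphi y a b * cinner mm (Jc (mcurv kk mm \<phi> y)) (vpd b \<phi> y))"
  by (simp only: JHcoord_def ginv_phi)

lemma JH0_eq: "y \<in> D \<Longrightarrow> JHcoord kk mm \<phi> 0 y = (1 / lam) * beta0 y (J1 y) (J2 y)"
proof -
  assume y: "y \<in> D"
  have "cinner mm (Jc (mcurv kk mm \<phi> y)) (vpd 0 \<phi> y) = beta0 y (J1 y) (J2 y)"
    using cinner_v0[OF y Jmc[OF y]] unfolding beta0_def .
  thus ?thesis unfolding JH_Gphi[OF y] Gphi_def sbf0 by simp
qed

lemma JH1_eq: "y \<in> D \<Longrightarrow> a < n1 \<Longrightarrow> JHcoord kk mm \<phi> (Suc a) y = (\<Sum>c<n1. G1 y a c * cinner (n1+1) (J1 y) (vpd c \<psi>1 (p y)))"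
proof -
  assume y: "y \<in> D" and a: "a < n1"
  have c0: "cc \<noteq> 0" using cc_pos by simp
  show ?thesis unfolding JH_Gphi[OF y] Gphi_def sbf1[OF a]
    by (intro sum.cong refl) (simp add: cinner_v1[OF y _ Jmc[OF y], simplified] c0)
qed

lemma JH2_eq: "y \<in> D \<Longrightarrow> a < n2 \<Longrightarrow> JHcoord kk mm \<phi> (Suc (n1 + a)) y = (\<Sum>c<n2. G2 y a c * cinner (n2+1) (J2 y) (vpd c \<psi>2 (q y)))"
proof -
  assume y: "y \<in> D" and a: "a < n2"
  have c0: "ss \<noteq> 0" using ss_pos by simp
  show ?thesis unfolding JH_Gphi[OF y] Gphi_def sbf2[OF a]
    by (intro sum.cong refl) (simp add: cinner_v2[OF y _ Jmc[OF y], simplified] c0)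
qed

end

context cset begin

lemma tanW1: "y \<in> D \<Longrightarrow> tan1 y (W1 y) = (\<lambda>j. of_real (1 / cc^2) * tan1 y (V1 y) j)"
proof (rule ext)
  fix j assume y: "y \<in> D"
  show "tan1 y (W1 y) j = of_real (1 / cc^2) * tan1 y (V1 y) j"
    unfolding W1_def tanproj_add tanproj_scale P1.tan_psi[OF D_p[OF y]] by simp
qed

lemma tanW2: "y \<in> D \<Longrightarrow> tan2 y (W2 y) = (\<lambda>j. of_real (1 / ss^2) * tan2 y (V2 y) j)"
proof (rule ext)
  fix j assume y: "y \<in> D"
  show "tan2 y (W2 y) j = of_real (1 / ss^2) * tan2 y (V2 y) j"
    unfolding W2_def tanproj_add tanproj_scale P2.tan_psi[OF D_q[OF y]] by simp
qed

lemma KEY1: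
  assumes y: "y \<in> D" and c: "c < n1"
  shows "cinner (n1+1) (J1 y) (vpd c \<psi>1 (p y)) =
    (real n1 / (real kk * cc^2)) * cinner (n1+1) (Jc (mcurv n1 (n1+1) \<psi>1 (p y))) (vpd c \<psi>1 (p y))"
proof -
  have u: "p y \<in> U1" using D_p[OF y] .
  have n1: "real n1 \<noteq> 0" using c by simp
  have cc0: "cc \<noteq> 0" using cc_pos by simp
  let ?L = "\<lambda>X. cinner (n1+1) (Jc X) (vpd c \<psi>1 (p y))"
  have LW: "?L (W1 y) = (1 / cc^2) * ?L (V1 y)"
    unfolding W1_def cJ_add cJ_scale P1.cJ_psi[OF u c] by simp
  have LP: "?L (P1 y) = (1 / cc^2) * (?L (V1 y) - ?L (tan1 y (V1 y)))"
    unfolding P1_def cJ_diff cJ_add cJ_scale cJ_iscale P1.cJ_psi[OF u c] P1.c_psi[OF u c] LW tanW1[OF y]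
    by (simp add: algebra_simps)
  define X where "X = ?L (V1 y) - ?L (tan1 y (V1 y))"
  have "real n1 / (real kk * cc^2) * (1 / real n1 * X) = 1 / real kk * (1 / cc^2 * X)"
    using n1 by simp
  thus ?thesis
    unfolding J1_def cJ_scale LP P1.L_mcurv[OF u c] X_def[symmetric] by (rule sym)
qed

lemma KEY2:
  assumes y: "y \<in> D" and c: "c < n2"
  shows "cinner (n2+1) (J2 y) (vpd c \<psi>2 (q y)) =
    (real n2 / (real kk * ss^2)) * cinner (n2+1) (Jc (mcurv n2 (n2+1) \<psi>2 (q y))) (vpd c \<psi>2 (q y))"
proof -
  have u: "q y \<in> U2" using D_q[OF y] .
  have n2: "real n2 \<noteq> 0" using c by simp
  have ss0: "ss \<noteq> 0" using ss_pos by simp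
  let ?L = "\<lambda>X. cinner (n2+1) (Jc X) (vpd c \<psi>2 (q y))"
  have LW: "?L (W2 y) = (1 / ss^2) * ?L (V2 y)"
    unfolding W2_def cJ_add cJ_scale P2.cJ_psi[OF u c] by simp
  have LP: "?L (P2 y) = (1 / ss^2) * (?L (V2 y) - ?L (tan2 y (V2 y)))"
  proof -
    have e: "(\<lambda>j. - \<i> * of_real BB * \<psi>2 (q y) j) = (\<lambda>j. \<i> * of_real (- BB) * \<psi>2 (q y) j)" by simp
    show ?thesis
      unfolding P2_def cJ_diff cJ_add cJ_scale e cJ_iscale P2.cJ_psi[OF u c] P2.c_psi[OF u c] LW tanW2[OF y]
      by (simp add: algebra_simps)
  qed
  define X where "X = ?L (V2 y) - ?L (tan2 y (V2 y))"
  have "real n2 / (real kk * ss^2) * (1 / real n2 * X) = 1 / real kk * (1 / ss^2 * X)"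
    using n2 by simp
  thus ?thesis
    unfolding J2_def cJ_scale LP P2.L_mcurv[OF u c] X_def[symmetric] by (rule sym)
qed

lemma JH1_final: "y \<in> D \<Longrightarrow> a < n1 \<Longrightarrow>
    JHcoord kk mm \<phi> (Suc a) y = (real n1 / (real kk * cc^2)) * JHcoord n1 (n1+1) \<psi>1 a (p y)"
proof -
  assume y: "y \<in> D" and a: "a < n1"
  show ?thesis unfolding JH1_eq[OF y a] JHcoord_def[of n1] sum_distrib_left
    by (rule sum.cong[OF refl], subst KEY1[OF y], auto)
qed

lemma JH2_final: "y \<in> D \<Longrightarrow> a < n2 \<Longrightarrow>
    JHcoord kk mm \<phi> (Suc (n1 + a)) y = (real n2 / (real kk * ss^2)) * JHcoord n2 (n2+1) \<psi>2 a (q y)"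
proof -
  assume y: "y \<in> D" and a: "a < n2"
  show ?thesis unfolding JH2_eq[OF y a] JHcoord_def[of n2] sum_distrib_left
    by (rule sum.cong[OF refl], subst KEY2[OF y], auto)
qed

end

context cset begin

lemma JH0_inv: "y \<in> D \<Longrightarrow> z \<in> D \<Longrightarrow> p z = p y \<Longrightarrow> q z = q y \<Longrightarrow> JHcoord kk mm \<phi> 0 z = JHcoord kk mm \<phi> 0 y"
  unfolding JH0_eq by (simp add: J1_def J2_def P1_def P2_def W1_def W2_def beta0_def rho0_def)

lemma pd_JH0: assumes y: "y \<in> D" shows "pd 0 (JHcoord kk mm \<phi> 0) y = 0"
proof -
  have "hlv 0 y (JHcoord kk mm \<phi> 0) 0"
    by (rule hlv_line_const) (rule JH0_inv[OF y D_upd0[OF y]], simp_all add: split1_upd0 split2_upd0)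
  thus ?thesis by (rule hlv_pd)
qed

lemma pd_JH1: assumes y: "y \<in> D" and a: "a < n1"
  shows "pd (Suc a) (JHcoord kk mm \<phi> (Suc a)) y = (real n1 / (real kk * cc^2)) * pd a (JHcoord n1 (n1+1) \<psi>1 a) (p y)"
proof -
  have py: "p y \<in> U1" using D_p[OF y] .
  have i: "Suc a < kk" using a by simp
  have h: "hlv a (p y) (JHcoord n1 (n1+1) \<psi>1 a) (pd a (JHcoord n1 (n1+1) \<psi>1 a) (p y))"
    by (rule ldx_hlv[OF P1.ldx_JH[OF py a]])
  have "hlv (Suc a) y (\<lambda>z. (real n1 / (real kk * cc^2)) * JHcoord n1 (n1+1) \<psi>1 a (p z))
      ((real n1 / (real kk * cc^2)) * pd a (JHcoord n1 (n1+1) \<psi>1 a) (p y))"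
    by (intro hlv_cmult hlv_split1[OF a h])
  hence "hlv (Suc a) y (JHcoord kk mm \<phi> (Suc a)) ((real n1 / (real kk * cc^2)) * pd a (JHcoord n1 (n1+1) \<psi>1 a) (p y))"
    by (rule hlv_cong[OF D_open i y, rotated]) (erule JH1_final[OF _ a, symmetric])
  thus ?thesis by (rule hlv_pd)
qed

lemma pd_JH2: assumes y: "y \<in> D" and a: "a < n2"
  shows "pd (Suc (n1 + a)) (JHcoord kk mm \<phi> (Suc (n1 + a))) y = (real n2 / (real kk * ss^2)) * pd a (JHcoord n2 (n2+1) \<psi>2 a) (q y)"
proof -
  have qy: "q y \<in> U2" using D_q[OF y] .
  have i: "Suc (n1 + a) < kk" using a by simp
  have h: "hlv a (q y) (JHcoord n2 (n2+1) \<psi>2 a) (pd a (JHcoord n2 (n2+1) \<psi>2 a) (q y))"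
    by (rule ldx_hlv[OF P2.ldx_JH[OF qy a]])
  have "hlv (Suc (n1 + a)) y (\<lambda>z. (real n2 / (real kk * ss^2)) * JHcoord n2 (n2+1) \<psi>2 a (q z))
      ((real n2 / (real kk * ss^2)) * pd a (JHcoord n2 (n2+1) \<psi>2 a) (q y))"
    by (intro hlv_cmult hlv_split2[OF a h])
  hence "hlv (Suc (n1 + a)) y (JHcoord kk mm \<phi> (Suc (n1 + a))) ((real n2 / (real kk * ss^2)) * pd a (JHcoord n2 (n2+1) \<psi>2 a) (q y))"
    by (rule hlv_cong[OF D_open i y, rotated]) (erule JH2_final[OF _ a, symmetric])
  thus ?thesis by (rule hlv_pd)
qed

definition DG :: "nat \<Rightarrow> nat \<Rightarrow> nat \<Rightarrow> coord \<Rightarrow> real" where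
  "DG i l b y = (if 0 < l \<and> l \<le> n1 \<and> 0 < b \<and> b \<le> n1 \<and> 0 < i \<and> i \<le> n1
      then cc^2 * pd (i - 1) (\<lambda>u. gmet (n1+1) \<psi>1 u (l - 1) (b - 1)) (p y)
    else if n1 < l \<and> n1 < b \<and> n1 < i
      then ss^2 * pd (i - Suc n1) (\<lambda>u. gmet (n2+1) \<psi>2 u (l - Suc n1) (b - Suc n1)) (q y)
    else 0)"

lemma hlv_gmet_phi:
  assumes y: "y \<in> D" and i: "i < kk" and l: "l < kk" and b: "b < kk"
  shows "hlv i y (\<lambda>z. gmet mm \<phi> z l b) (DG i l b y)"
proof -
  have py: "p y \<in> U1" and qy: "q y \<in> U2" using D_p[OF y] D_q[OF y] .
  have eq: "\<And>z. z \<in> D \<Longrightarrow> gphi z l b = gmet mm \<phi> z l b" using gmet_phi l b by simp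
  have "hlv i y (\<lambda>z. gphi z l b) (DG i l b y)"
  proof -
    consider (b1) "0 < l \<and> l \<le> n1 \<and> 0 < b \<and> b \<le> n1" | (b2) "n1 < l \<and> n1 < b" | (o) "\<not> (0 < l \<and> l \<le> n1 \<and> 0 < b \<and> b \<le> n1)" "\<not> (n1 < l \<and> n1 < b)"
      by blast
    thus ?thesis
    proof cases
      case b1
      have g: "\<And>z. gphi z l b = cc^2 * gmet (n1+1) \<psi>1 (p z) (l - 1) (b - 1)"
        unfolding gphi_def bf_def using b1 by auto
      consider (z) "i = 0" | (s) i' where "i = Suc i'" "i' < n1" | (t) i' where "i = Suc (n1 + i')" "i' < n2"
        using idx_cases[OF i] by blast
      thus ?thesis
      proof cases
        case z
        have "DG i l b y = 0" unfolding DG_def using z by simp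
        moreover have "hlv i y (\<lambda>z. gphi z l b) 0"
          by (rule hlv_line_const) (simp add: g z split1_upd0)
        ultimately show ?thesis by simp
      next
        case s
        have l1: "l - 1 < n1" "b - 1 < n1" using b1 by auto
        have h: "hlv i' (p y) (\<lambda>u. gmet (n1+1) \<psi>1 u (l - 1) (b - 1)) (pd i' (\<lambda>u. gmet (n1+1) \<psi>1 u (l - 1) (b - 1)) (p y))"
          by (rule ldx_hlv[OF P1.ldx_gmet[OF py s(2) l1]])
        have "hlv i y (\<lambda>z. cc^2 * gmet (n1+1) \<psi>1 (p z) (l - 1) (b - 1)) (cc^2 * pd i' (\<lambda>u. gmet (n1+1) \<psi>1 u (l - 1) (b - 1)) (p y))"
          unfolding s(1) by (intro hlv_cmult hlv_split1[OF s(2) h])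
        moreover have "DG i l b y = cc^2 * pd i' (\<lambda>u. gmet (n1+1) \<psi>1 u (l - 1) (b - 1)) (p y)"
          unfolding DG_def using b1 s by simp
        ultimately show ?thesis unfolding g by simp
      next
        case t
        have "DG i l b y = 0" unfolding DG_def using b1 t by simp
        moreover have "hlv i y (\<lambda>z. gphi z l b) 0"
          by (rule hlv_line_const) (simp add: g t split1_upd2)
        ultimately show ?thesis by simp
      qed
    next
      case b2
      have g: "\<And>z. gphi z l b = ss^2 * gmet (n2+1) \<psi>2 (q z) (l - Suc n1) (b - Suc n1)"
        unfolding gphi_def bf_def using b2 l b by auto
      consider (z) "i = 0" | (s) i' where "i = Suc i'" "i' < n1" | (t) i' where "i = Suc (n1 + i')" "i' < n2"
        using idx_cases[OF i] by blast
      thus ?thesis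
      proof cases
        case z
        have "DG i l b y = 0" unfolding DG_def using z by simp
        moreover have "hlv i y (\<lambda>z. gphi z l b) 0"
          by (rule hlv_line_const) (simp add: g z split2_upd0)
        ultimately show ?thesis by simp
      next
        case s
        have "DG i l b y = 0" unfolding DG_def using b2 s by simp
        moreover have "hlv i y (\<lambda>z. gphi z l b) 0"
          by (rule hlv_line_const) (simp add: g s split2_upd1)
        ultimately show ?thesis by simp
      next
        case t
        have l1: "l - Suc n1 < n2" "b - Suc n1 < n2" using b2 l b by auto
        have h: "hlv i' (q y) (\<lambda>u. gmet (n2+1) \<psi>2 u (l - Suc n1) (b - Suc n1)) (pd i' (\<lambda>u. gmet (n2+1) \<psi>2 u (l - Suc n1) (b - Suc n1)) (q y))"
          by (rule ldx_hlv[OF P2.ldx_gmet[OF qy t(2) l1]])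
        have "hlv i y (\<lambda>z. ss^2 * gmet (n2+1) \<psi>2 (q z) (l - Suc n1) (b - Suc n1)) (ss^2 * pd i' (\<lambda>u. gmet (n2+1) \<psi>2 u (l - Suc n1) (b - Suc n1)) (q y))"
          unfolding t(1) by (intro hlv_cmult hlv_split2[OF t(2) h])
        moreover have "DG i l b y = ss^2 * pd i' (\<lambda>u. gmet (n2+1) \<psi>2 u (l - Suc n1) (b - Suc n1)) (q y)"
          unfolding DG_def using b2 t by simp
        ultimately show ?thesis unfolding g by simp
      qed
    next
      case o
      have g: "\<And>z. gphi z l b = (if l = 0 \<and> b = 0 then lam else 0)"
        unfolding gphi_def bf_def using o l b by auto
      have "DG i l b y = 0" unfolding DG_def using o by auto
      moreover have "hlv i y (\<lambda>z. gphi z l b) 0"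
        by (rule hlv_line_const) (simp add: g)
      ultimately show ?thesis by simp
    qed
  qed
  note h = this
  show ?thesis using hlv_cong[OF D_open i y eq h] .
qed

lemma pd_gmet_phi: "y \<in> D \<Longrightarrow> i < kk \<Longrightarrow> l < kk \<Longrightarrow> b < kk \<Longrightarrow> pd i (\<lambda>z. gmet mm \<phi> z l b) y = DG i l b y"
  using hlv_gmet_phi hlv_pd by blast

end

context cset begin

lemma chr_eq: "y \<in> D \<Longrightarrow> a < kk \<Longrightarrow> b < kk \<Longrightarrow> christoffel kk mm \<phi> y a a b =
   (1/2) * (\<Sum>l<kk. Gphi y a l * (DG a l b y + DG b l a y - DG l a b y))"
proof -
  assume y: "y \<in> D" and a: "a < kk" and b: "b < kk"
  show ?thesis unfolding christoffel_def ginv_phi[OF y]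
    by (intro arg_cong[where f="\<lambda>x. (1/2) * x"] sum.cong refl)
       (simp only: lessThan_iff pd_gmet_phi[OF y a _ b] pd_gmet_phi[OF y b _ a] pd_gmet_phi[OF y _ a b])
qed

lemma chr0: "y \<in> D \<Longrightarrow> b < kk \<Longrightarrow> christoffel kk mm \<phi> y 0 0 b = 0"
proof -
  assume y: "y \<in> D" and b: "b < kk"
  have k: "0 < kk" by simp
  show ?thesis unfolding chr_eq[OF y k b] Gphi_def sbf0 by (simp add: DG_def)
qed

lemma chr1: assumes y: "y \<in> D" and a: "a < n1" and b: "b < kk"
  shows "christoffel kk mm \<phi> y (Suc a) (Suc a) b =
     (if b = 0 then 0 else if b \<le> n1 then christoffel n1 (n1+1) \<psi>1 (p y) a a (b - 1) else 0)"
proof -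
  have c0: "cc \<noteq> 0" using cc_pos by simp
  have "christoffel kk mm \<phi> y (Suc a) (Suc a) b = (1/2) * (\<Sum>l<n1. G1 y a l / cc^2 *
      (DG (Suc a) (Suc l) b y + DG b (Suc l) (Suc a) y - DG (Suc l) (Suc a) b y))"
    using chr_eq[OF y _ b, of "Suc a"] a unfolding Gphi_def sbf1[OF a] by simp
  also have "\<dots> = (if b = 0 then 0 else if b \<le> n1 then christoffel n1 (n1+1) \<psi>1 (p y) a a (b - 1) else 0)"
  proof -
    consider (z) "b = 0" | (s) b' where "b = Suc b'" "b' < n1" | (t) b' where "b = Suc (n1 + b')" "b' < n2"
      using idx_cases[OF b] by blast
    thus ?thesis
    proof cases
      case z thus ?thesis by (simp add: DG_def)
    next
      case s
      have "(\<Sum>l<n1. G1 y a l / cc^2 * (DG (Suc a) (Suc l) b y + DG b (Suc l) (Suc a) y - DG (Suc l) (Suc a) b y))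
         = (\<Sum>l<n1. G1 y a l * (pd a (\<lambda>u. gmet (n1+1) \<psi>1 u l b') (p y) + pd b' (\<lambda>u. gmet (n1+1) \<psi>1 u l a) (p y)
               - pd l (\<lambda>u. gmet (n1+1) \<psi>1 u a b') (p y)))"
      proof (rule sum.cong[OF refl])
        fix l assume "l \<in> {..<n1}"
        hence l: "l < n1" by simp
        have "DG (Suc a) (Suc l) b y = cc^2 * pd a (\<lambda>u. gmet (n1+1) \<psi>1 u l b') (p y)"
          "DG b (Suc l) (Suc a) y = cc^2 * pd b' (\<lambda>u. gmet (n1+1) \<psi>1 u l a) (p y)"
          "DG (Suc l) (Suc a) b y = cc^2 * pd l (\<lambda>u. gmet (n1+1) \<psi>1 u a b') (p y)"
          unfolding DG_def s(1) using l a s(2) by simp_all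
        thus "G1 y a l / cc^2 * (DG (Suc a) (Suc l) b y + DG b (Suc l) (Suc a) y - DG (Suc l) (Suc a) b y)
          = G1 y a l * (pd a (\<lambda>u. gmet (n1+1) \<psi>1 u l b') (p y) + pd b' (\<lambda>u. gmet (n1+1) \<psi>1 u l a) (p y)
               - pd l (\<lambda>u. gmet (n1+1) \<psi>1 u a b') (p y))"
          using c0 by (simp add: field_simps)
      qed
      thus ?thesis unfolding christoffel_def using s by simp
    next
      case t thus ?thesis using a by (simp add: DG_def)
    qed
  qed
  finally show ?thesis .
qed


lemma chr2: assumes y: "y \<in> D" and a: "a < n2" and b: "b < kk"
  shows "christoffel kk mm \<phi> y (Suc (n1 + a)) (Suc (n1 + a)) b =
     (if n1 < b then christoffel n2 (n2+1) \<psi>2 (q y) a a (b - Suc n1) else 0)"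
proof -
  have c0: "ss \<noteq> 0" using ss_pos by simp
  have "christoffel kk mm \<phi> y (Suc (n1 + a)) (Suc (n1 + a)) b = (1/2) * (\<Sum>l<n2. G2 y a l / ss^2 *
      (DG (Suc (n1 + a)) (Suc (n1 + l)) b y + DG b (Suc (n1 + l)) (Suc (n1 + a)) y - DG (Suc (n1 + l)) (Suc (n1 + a)) b y))"
    using chr_eq[OF y _ b, of "Suc (n1 + a)"] a unfolding Gphi_def sbf2[OF a] by simp
  also have "\<dots> = (if n1 < b then christoffel n2 (n2+1) \<psi>2 (q y) a a (b - Suc n1) else 0)"
  proof -
    consider (z) "b = 0" | (s) b' where "b = Suc b'" "b' < n1" | (t) b' where "b = Suc (n1 + b')" "b' < n2"
      using idx_cases[OF b] by blast
    thus ?thesis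
    proof cases
      case z thus ?thesis by (simp add: DG_def)
    next
      case s thus ?thesis using a by (simp add: DG_def)
    next
      case t
      have "(\<Sum>l<n2. G2 y a l / ss^2 * (DG (Suc (n1 + a)) (Suc (n1 + l)) b y + DG b (Suc (n1 + l)) (Suc (n1 + a)) y - DG (Suc (n1 + l)) (Suc (n1 + a)) b y))
         = (\<Sum>l<n2. G2 y a l * (pd a (\<lambda>u. gmet (n2+1) \<psi>2 u l b') (q y) + pd b' (\<lambda>u. gmet (n2+1) \<psi>2 u l a) (q y)
               - pd l (\<lambda>u. gmet (n2+1) \<psi>2 u a b') (q y)))"
      proof (rule sum.cong[OF refl])
        fix l assume "l \<in> {..<n2}"
        hence l: "l < n2" by simp
        have "DG (Suc (n1 + a)) (Suc (n1 + l)) b y = ss^2 * pd a (\<lambda>u. gmet (n2+1) \<psi>2 u l b') (q y)"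
          "DG b (Suc (n1 + l)) (Suc (n1 + a)) y = ss^2 * pd b' (\<lambda>u. gmet (n2+1) \<psi>2 u l a) (q y)"
          "DG (Suc (n1 + l)) (Suc (n1 + a)) b y = ss^2 * pd l (\<lambda>u. gmet (n2+1) \<psi>2 u a b') (q y)"
          unfolding DG_def t(1) using l a t(2) by simp_all
        thus "G2 y a l / ss^2 * (DG (Suc (n1 + a)) (Suc (n1 + l)) b y + DG b (Suc (n1 + l)) (Suc (n1 + a)) y - DG (Suc (n1 + l)) (Suc (n1 + a)) b y)
          = G2 y a l * (pd a (\<lambda>u. gmet (n2+1) \<psi>2 u l b') (q y) + pd b' (\<lambda>u. gmet (n2+1) \<psi>2 u l a) (q y)
               - pd l (\<lambda>u. gmet (n2+1) \<psi>2 u a b') (q y))"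
          using c0 by (simp add: field_simps)
      qed
      thus ?thesis unfolding christoffel_def using t by simp
    qed
  qed
  finally show ?thesis .
qed

definition "kap1 = real n1 / (real kk * cc^2)"
definition "kap2 = real n2 / (real kk * ss^2)"

lemma divJH_phi: assumes y: "y \<in> D"
  shows "divJH kk mm \<phi> y = kap1 * divJH n1 (n1+1) \<psi>1 (p y) + kap2 * divJH n2 (n2+1) \<psi>2 (q y)"
proof -
  let ?X = "\<lambda>b. JHcoord kk mm \<phi> b y"
  let ?T = "\<lambda>a. pd a (JHcoord kk mm \<phi> a) y + (\<Sum>b<kk. christoffel kk mm \<phi> y a a b * ?X b)"
  have T0: "?T 0 = 0"
    using pd_JH0[OF y] chr0[OF y] by (simp add: sum.neutral)
  have T1: "?T (Suc a) = kap1 * (pd a (JHcoord n1 (n1+1) \<psi>1 a) (p y) +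
      (\<Sum>b<n1. christoffel n1 (n1+1) \<psi>1 (p y) a a b * JHcoord n1 (n1+1) \<psi>1 b (p y)))" if a: "a < n1" for a
  proof -
    have s1: "(\<Sum>b<n1. christoffel kk mm \<phi> y (Suc a) (Suc a) (Suc b) * ?X (Suc b)) =
        (\<Sum>b<n1. kap1 * (christoffel n1 (n1+1) \<psi>1 (p y) a a b * JHcoord n1 (n1+1) \<psi>1 b (p y)))"
    proof (rule sum.cong[OF refl])
      fix b assume "b \<in> {..<n1}"
      hence b: "b < n1" by simp
      have bk: "Suc b < kk" using b by simp
      show "christoffel kk mm \<phi> y (Suc a) (Suc a) (Suc b) * ?X (Suc b) = kap1 * (christoffel n1 (n1+1) \<psi>1 (p y) a a b * JHcoord n1 (n1+1) \<psi>1 b (p y))"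
        unfolding chr1[OF y a bk] JH1_final[OF y b] kap1_def using b by simp
    qed
    have s2: "(\<Sum>b<n2. christoffel kk mm \<phi> y (Suc a) (Suc a) (Suc (n1 + b)) * ?X (Suc (n1 + b))) = 0"
    proof (rule sum.neutral, intro ballI)
      fix b assume "b \<in> {..<n2}"
      hence bk: "Suc (n1 + b) < kk" by simp
      show "christoffel kk mm \<phi> y (Suc a) (Suc a) (Suc (n1 + b)) * ?X (Suc (n1 + b)) = 0"
        unfolding chr1[OF y a bk] by simp
    qed
    have s0: "christoffel kk mm \<phi> y (Suc a) (Suc a) 0 * ?X 0 = 0"
      using chr1[OF y a, of 0] by simp
    show ?thesis unfolding sum_k[of "\<lambda>b. christoffel kk mm \<phi> y (Suc a) (Suc a) b * ?X b"] s0 s1 s2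
      pd_JH1[OF y a] kap1_def[symmetric] by (simp add: sum_distrib_left algebra_simps)
  qed
  have T2: "?T (Suc (n1 + a)) = kap2 * (pd a (JHcoord n2 (n2+1) \<psi>2 a) (q y) +
      (\<Sum>b<n2. christoffel n2 (n2+1) \<psi>2 (q y) a a b * JHcoord n2 (n2+1) \<psi>2 b (q y)))" if a: "a < n2" for a
  proof -
    have s2: "(\<Sum>b<n2. christoffel kk mm \<phi> y (Suc (n1 + a)) (Suc (n1 + a)) (Suc (n1 + b)) * ?X (Suc (n1 + b))) =
        (\<Sum>b<n2. kap2 * (christoffel n2 (n2+1) \<psi>2 (q y) a a b * JHcoord n2 (n2+1) \<psi>2 b (q y)))"
    proof (rule sum.cong[OF refl])
      fix b assume "b \<in> {..<n2}"
      hence b: "b < n2" by simp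
      have bk: "Suc (n1 + b) < kk" using b by simp
      show "christoffel kk mm \<phi> y (Suc (n1 + a)) (Suc (n1 + a)) (Suc (n1 + b)) * ?X (Suc (n1 + b)) = kap2 * (christoffel n2 (n2+1) \<psi>2 (q y) a a b * JHcoord n2 (n2+1) \<psi>2 b (q y))"
        unfolding chr2[OF y a bk] JH2_final[OF y b] kap2_def using b by simp
    qed
    have s1: "(\<Sum>b<n1. christoffel kk mm \<phi> y (Suc (n1 + a)) (Suc (n1 + a)) (Suc b) * ?X (Suc b)) = 0"
    proof (rule sum.neutral, intro ballI)
      fix b assume "b \<in> {..<n1}"
      hence b: "b < n1" and bk: "Suc b < kk" by auto
      show "christoffel kk mm \<phi> y (Suc (n1 + a)) (Suc (n1 + a)) (Suc b) * ?X (Suc b) = 0"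
        unfolding chr2[OF y a bk] using b by simp
    qed
    have s0: "christoffel kk mm \<phi> y (Suc (n1 + a)) (Suc (n1 + a)) 0 * ?X 0 = 0"
      using chr2[OF y a, of 0] by simp
    show ?thesis unfolding sum_k[of "\<lambda>b. christoffel kk mm \<phi> y (Suc (n1 + a)) (Suc (n1 + a)) b * ?X b"] s0 s1 s2
      pd_JH2[OF y a] kap2_def[symmetric] by (simp add: sum_distrib_left algebra_simps)
  qed
  have "divJH kk mm \<phi> y = (\<Sum>a<kk. ?T a)" unfolding divJH_def ..
  also have "\<dots> = ?T 0 + (\<Sum>a<n1. ?T (Suc a)) + (\<Sum>a<n2. ?T (Suc (n1 + a)))" by (rule sum_k)
  also have "\<dots> = kap1 * divJH n1 (n1+1) \<psi>1 (p y) + kap2 * divJH n2 (n2+1) \<psi>2 (q y)"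
  proof -
    have A: "(\<Sum>a<n1. ?T (Suc a)) = kap1 * divJH n1 (n1+1) \<psi>1 (p y)"
      unfolding divJH_def sum_distrib_left by (rule sum.cong[OF refl]) (simp only: lessThan_iff T1)
    have B: "(\<Sum>a<n2. ?T (Suc (n1 + a))) = kap2 * divJH n2 (n2+1) \<psi>2 (q y)"
      unfolding divJH_def sum_distrib_left by (rule sum.cong[OF refl]) (simp only: lessThan_iff T2)
    show ?thesis unfolding A B T0 by simp
  qed
  finally show ?thesis .
qed

end

lemma cinner_J_self: "cinner m v (Jc v) = 0"
proof -
  have "\<And>j. Re (v j * cnj (\<i> * v j)) = 0"
    by (simp add: algebra_simps)
  thus ?thesis unfolding cinner_def Jc_def by simp
qed

context legimm begin

lemma nproj_Vtr_zero:
  assumes x: "x \<in> U" and mc: "\<forall>j<m. mcurv k m \<psi> x j = 0" and j: "j < m"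
  shows "nproj k m \<psi> x (Vtr k m \<psi> x) j = 0"
proof (cases "k = 0")
  case True
  have "Vtr k m \<psi> x = (\<lambda>j. 0)" unfolding Vtr_def True by simp
  thus ?thesis unfolding nproj_def tanproj_def True by (simp add: cinner_zero_left)
next
  case False
  have "of_real (1 / real k) * nproj k m \<psi> x (Vtr k m \<psi> x) j = 0"
    using mc j mcurv_Vtr by metis
  thus ?thesis using False by simp
qed

lemma Vtr_decomp:
  assumes x: "x \<in> U" and mc: "\<forall>j<m. mcurv k m \<psi> x j = 0" and j: "j < m"
  shows "Vtr k m \<psi> x j = tanproj k m \<psi> x (Vtr k m \<psi> x) j + of_real (cinner m (Vtr k m \<psi> x) (\<psi> x)) * \<psi> x j"
  using nproj_Vtr_zero[OF x mc j] unfolding nproj_def by (simp add: algebra_simps)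

lemma cinner_Vtr_psi: "x \<in> U \<Longrightarrow> cinner m (Vtr k m \<psi> x) (\<psi> x) = - real k"
proof -
  assume x: "x \<in> U"
  have "cinner m (Vtr k m \<psi> x) (\<psi> x) = (\<Sum>a<k. \<Sum>b<k. ginv k m \<psi> x a b * cinner m (vpd a (vpd b \<psi>) x) (\<psi> x))"
    unfolding Vtr_def by (simp add: cinner_sum_left cinner_scale_left)
  also have "\<dots> = (\<Sum>a<k. \<Sum>b<k. - (ginv k m \<psi> x a b * gmet m \<psi> x b a))"
    by (intro sum.cong refl) (simp add: second_order[OF x])
  also have "\<dots> = - real k" using trace[OF x] by (simp add: sum_negf)
  finally show ?thesis .
qed

lemma cinner_tan_J: "x \<in> U \<Longrightarrow> cinner m (tanproj k m \<psi> x v) (Jc (\<psi> x)) = 0"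
  unfolding tanproj_def cinner_sum_left[OF finite_lessThan] cinner_scale_left
  by (intro sum.neutral ballI) (simp add: legJ)

lemma cinner_Vtr_J:
  assumes x: "x \<in> U" and mc: "\<forall>j<m. mcurv k m \<psi> x j = 0"
  shows "cinner m (Vtr k m \<psi> x) (Jc (\<psi> x)) = 0"
proof -
  have "cinner m (Vtr k m \<psi> x) (Jc (\<psi> x)) = cinner m (\<lambda>j. tanproj k m \<psi> x (Vtr k m \<psi> x) j
     + of_real (cinner m (Vtr k m \<psi> x) (\<psi> x)) * \<psi> x j) (Jc (\<psi> x))"
    by (rule cinner_cong) (use Vtr_decomp[OF x mc] in auto)
  also have "\<dots> = 0"
    unfolding cinner_add_left cinner_scale_left using cinner_tan_J[OF x] cinner_J_self[of m "\<psi> x"]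
    by simp
  finally show ?thesis .
qed

end

lemma numid: fixes n1 n2 :: nat and c s :: real
  assumes c2: "c = (real n1 + 1) / (real n1 + real n2 + 2)" and s2: "s = (real n2 + 1) / (real n1 + real n2 + 2)"
  shows "real (n1 + n2 + 1) * c - s - real n1 = 0"
proof -
  define N where "N = real n1 + real n2 + 2"
  have N: "N \<noteq> 0" unfolding N_def by simp
  have cN: "c * N = real n1 + 1" unfolding c2 N_def[symmetric] using N by simp
  have sN: "s * N = real n2 + 1" unfolding s2 N_def[symmetric] using N by simp
  have "(real (n1 + n2 + 1) * c - s - real n1) * N = real (n1 + n2 + 1) * (c * N) - s * N - real n1 * N"
    by (simp add: algebra_simps)
  also have "\<dots> = 0" unfolding cN sN unfolding N_def by (simp add: algebra_simps)
  finally show ?thesis using N by simp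
qed

context cset begin

lemma AAlam: "AA^2 / lam = ss^2 / cc^2"
proof -
  have c0: "cc^2 \<noteq> 0" using cc_pos by simp
  have l0: "lam \<noteq> 0" using lam_pos by simp
  have "(AA * cc^2)^2 = (BB * ss^2)^2" using AB by simp
  hence h: "BB^2 * ss^2 * ss^2 = AA^2 * cc^2 * cc^2" by (simp add: power_mult_distrib power2_eq_square mult_ac)
  have "ss^2 * lam = ss^2 * (AA^2 * cc^2) + BB^2 * ss^2 * ss^2" unfolding lam_def by (simp add: algebra_simps)
  also have "\<dots> = ss^2 * (AA^2 * cc^2) + AA^2 * cc^2 * cc^2" unfolding h ..
  also have "\<dots> = AA^2 * cc^2 * (ss^2 + cc^2)" by (simp add: algebra_simps)
  also have "\<dots> = AA^2 * cc^2" using cs1 by simp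
  finally have "AA^2 * cc^2 = ss^2 * lam" by simp
  thus ?thesis using c0 l0 by (simp add: field_simps)
qed

lemma BBlam: "BB^2 / lam = cc^2 / ss^2"
proof -
  have s0: "ss^2 \<noteq> 0" using ss_pos by simp
  have l0: "lam \<noteq> 0" using lam_pos by simp
  have "(AA * cc^2)^2 = (BB * ss^2)^2" using AB by simp
  hence h: "AA^2 * cc^2 * cc^2 = BB^2 * ss^2 * ss^2" by (simp add: power_mult_distrib power2_eq_square mult_ac)
  have "cc^2 * lam = AA^2 * cc^2 * cc^2 + cc^2 * (BB^2 * ss^2)" unfolding lam_def by (simp add: algebra_simps)
  also have "\<dots> = BB^2 * ss^2 * ss^2 + cc^2 * (BB^2 * ss^2)" unfolding h ..
  also have "\<dots> = BB^2 * ss^2 * (ss^2 + cc^2)" by (simp add: algebra_simps)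
  also have "\<dots> = BB^2 * ss^2" using cs1 by simp
  finally have "BB^2 * ss^2 = cc^2 * lam" by simp
  thus ?thesis using s0 l0 by (simp add: field_simps)
qed

context
  assumes mc1: "\<forall>x\<in>U1. \<forall>j<n1+1. mcurv n1 (n1+1) \<psi>1 x j = 0"
    and mc2: "\<forall>x\<in>U2. \<forall>j<n2+1. mcurv n2 (n2+1) \<psi>2 x j = 0"
begin

lemma beta_zero: assumes y: "y \<in> D" shows "beta0 y (W1 y) (W2 y) = 0"
proof -
  have py: "p y \<in> U1" and qy: "q y \<in> U2" using D_p[OF y] D_q[OF y] .
  have e1: "(\<lambda>j. \<i> * of_real AA * \<psi>1 (p y) j) = (\<lambda>j. of_real AA * Jc (\<psi>1 (p y)) j)"
    by (auto simp: Jc_def mult_ac)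
  have e2: "(\<lambda>j. - \<i> * of_real BB * \<psi>2 (q y) j) = (\<lambda>j. of_real (- BB) * Jc (\<psi>2 (q y)) j)"
    by (auto simp: Jc_def mult_ac)
  have z1: "cinner (n1+1) (Vtr n1 (n1+1) \<psi>1 (p y)) (Jc (\<psi>1 (p y))) = 0"
    by (rule P1.cinner_Vtr_J[OF py]) (use mc1 py in blast)
  have z2: "cinner (n2+1) (Vtr n2 (n2+1) \<psi>2 (q y)) (Jc (\<psi>2 (q y))) = 0"
    by (rule P2.cinner_Vtr_J[OF qy]) (use mc2 qy in blast)
  show ?thesis unfolding beta0_def e1 e2 cinner_scale_right W1_def W2_def cinner_add_left cinner_scale_left
    z1 z2 cinner_J_self by simp
qed

lemma rho_val: assumes y: "y \<in> D" shows "rho0 y (W1 y) (W2 y) = - real kk"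
proof -
  have py: "p y \<in> U1" and qy: "q y \<in> U2" using D_p[OF y] D_q[OF y] .
  have c0: "cc^2 \<noteq> 0" "ss^2 \<noteq> 0" using cc_pos ss_pos by auto
  have l0: "lam \<noteq> 0" using lam_pos by simp
  have "rho0 y (W1 y) (W2 y) = cc^2 * (- (AA^2) / lam + 1 / cc^2 * (- real n1)) + ss^2 * (- (BB^2) / lam + 1 / ss^2 * (- real n2))"
    unfolding rho0_def W1_def W2_def cinner_add_left cinner_scale_left P1.norm1[OF py] P2.norm1[OF qy]
      P1.cinner_Vtr_psi[OF py] P2.cinner_Vtr_psi[OF qy] by simp
  also have "\<dots> = - ((AA^2 * cc^2 + BB^2 * ss^2) / lam) - real n1 - real n2"
    using c0 l0 by (simp add: field_simps)
  also have "\<dots> = - real kk" unfolding lam_def[symmetric] using l0 by simp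
  finally show ?thesis .
qed

lemma P1_val: assumes y: "y \<in> D" and j: "j < n1 + 1"
  shows "P1 y j = of_real (real kk - AA^2 / lam - real n1 / cc^2) * \<psi>1 (p y) j"
proof -
  have py: "p y \<in> U1" using D_p[OF y] .
  have V: "V1 y j = tan1 y (V1 y) j + of_real (- real n1) * \<psi>1 (p y) j"
    using P1.Vtr_decomp[OF py _ j] mc1 py P1.cinner_Vtr_psi[OF py] by simp
  show ?thesis unfolding P1_def unfolding beta_zero[OF y] rho_val[OF y] tanW1[OF y] unfolding W1_def
    by (subst V) (simp add: algebra_simps)
qed

lemma P2_val: assumes y: "y \<in> D" and j: "j < n2 + 1"
  shows "P2 y j = of_real (real kk - BB^2 / lam - real n2 / ss^2) * \<psi>2 (q y) j"
proof -
  have qy: "q y \<in> U2" using D_q[OF y] .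
  have V: "V2 y j = tan2 y (V2 y) j + of_real (- real n2) * \<psi>2 (q y) j"
    using P2.Vtr_decomp[OF qy _ j] mc2 qy P2.cinner_Vtr_psi[OF qy] by simp
  show ?thesis unfolding P2_def unfolding beta_zero[OF y] rho_val[OF y] tanW2[OF y] unfolding W2_def
    by (subst V) (simp add: algebra_simps)
qed

lemma minimal_phi:
  assumes c2: "cc^2 = (real n1 + 1) / (real n1 + real n2 + 2)"
  shows "minimal kk mm D \<phi>"
proof -
  have s2: "ss^2 = (real n2 + 1) / (real n1 + real n2 + 2)"
    using cs1 c2 by (simp add: field_simps)
  have c0: "cc^2 \<noteq> 0" "ss^2 \<noteq> 0" using cc_pos ss_pos by auto
  have k1: "real kk - AA^2 / lam - real n1 / cc^2 = 0"
  proof -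
    have "real kk - AA^2 / lam - real n1 / cc^2 = (real kk * cc^2 - ss^2 - real n1) / cc^2"
      unfolding AAlam using c0 by (simp add: field_simps)
    also have "real kk * cc^2 - ss^2 - real n1 = 0" by (rule numid[OF c2 s2])
    finally show ?thesis by simp
  qed
  have s2': "ss^2 = (real n2 + 1) / (real n2 + real n1 + 2)" using s2 by (simp add: add_ac)
  have c2': "cc^2 = (real n1 + 1) / (real n2 + real n1 + 2)" using c2 by (simp add: add_ac)
  have k2: "real kk - BB^2 / lam - real n2 / ss^2 = 0"
  proof -
    have "real kk - BB^2 / lam - real n2 / ss^2 = (real (n2 + n1 + 1) * ss^2 - cc^2 - real n2) / ss^2"
      unfolding BBlam using c0 by (simp add: field_simps)
    also have "real (n2 + n1 + 1) * ss^2 - cc^2 - real n2 = 0" by (rule numid[OF s2' c2'])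
    finally show ?thesis by simp
  qed
  show ?thesis unfolding minimal_def
  proof (intro ballI allI impI)
    fix y j assume y: "y \<in> D" and j: "j < mm"
    have "mcurv kk mm \<phi> y j = bv (y 0) (\<lambda>j. of_real (1 / real kk) * P1 y j) (\<lambda>j. of_real (1 / real kk) * P2 y j) j"
      using mcurv_phi[OF y] j unfolding eqm_def by blast
    also have "\<dots> = 0"
    proof (cases "j < n1 + 1")
      case True
      have "P1 y j = 0" unfolding P1_val[OF y True] k1 by simp
      thus ?thesis unfolding bv_def using True by simp
    next
      case False
      have jj: "j - (n1 + 1) < n2 + 1" using False j by simp
      have "P2 y (j - (n1 + 1)) = 0" unfolding P2_val[OF y jj] k2 by simp
      thus ?thesis unfolding bv_def using False by simp
    qed
    finally show "mcurv kk mm \<phi> y j = 0" .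
  qed
qed

end

end

theorem corollary2:
  fixes n1 n2 :: nat
  shows "(\<forall>U1 U2 \<psi>1 \<psi>2 \<delta>.
            C_minimal_legendrian_immersion n1 U1 \<psi>1 \<and>
            C_minimal_legendrian_immersion n2 U2 \<psi>2 \<and> 0 < \<delta> \<and> \<delta> < pi / 2 \<longrightarrow>
            C_minimal_legendrian_immersion (n1 + n2 + 1) (prod_dom n1 n2 U1 U2)
              (phi_delta n1 n2 \<delta> \<psi>1 \<psi>2))
       \<and> (\<forall>U1 U2 \<psi>1 \<psi>2.
            minimal_legendrian_immersion n1 U1 \<psi>1 \<and>
            minimal_legendrian_immersion n2 U2 \<psi>2 \<longrightarrow>
            minimal_legendrian_immersion (n1 + n2 + 1) (prod_dom n1 n2 U1 U2)
              (phi_delta n1 n2 (arctan (sqrt ((real n2 + 1) / (real n1 + 1)))) \<psi>1 \<psi>2))"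
proof (intro conjI allI impI)
  have m: "n1 + n2 + 1 + 1 = n1 + n2 + 2" by simp
  fix U1 U2 \<psi>1 \<psi>2 \<delta>
  assume h: "C_minimal_legendrian_immersion n1 U1 \<psi>1 \<and>
            C_minimal_legendrian_immersion n2 U2 \<psi>2 \<and> 0 < \<delta> \<and> \<delta> < pi / 2"
  interpret cset n1 n2 U1 U2 \<psi>1 \<psi>2 \<delta>
    by unfold_locales (use h in \<open>auto simp: C_minimal_legendrian_immersion_def\<close>)
  have cm1: "C_minimal n1 (n1+1) U1 \<psi>1" and cm2: "C_minimal n2 (n2+1) U2 \<psi>2"
    using h unfolding C_minimal_legendrian_immersion_def by auto
  have "C_minimal kk mm D \<phi>"
    unfolding C_minimal_def
  proof
    fix y assume y: "y \<in> D"
    have "divJH n1 (n1+1) \<psi>1 (p y) = 0" using cm1 D_p[OF y] unfolding C_minimal_def by blast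
    moreover have "divJH n2 (n2+1) \<psi>2 (q y) = 0" using cm2 D_q[OF y] unfolding C_minimal_def by blast
    ultimately show "divJH kk mm \<phi> y = 0" unfolding divJH_phi[OF y] by simp
  qed
  thus "C_minimal_legendrian_immersion (n1 + n2 + 1) (prod_dom n1 n2 U1 U2) (phi_delta n1 n2 \<delta> \<psi>1 \<psi>2)"
    unfolding C_minimal_legendrian_immersion_def m using immersion_phi legendrian_phi by blast
next
  have m: "n1 + n2 + 1 + 1 = n1 + n2 + 2" by simp
  fix U1 U2 \<psi>1 \<psi>2
  assume h: "minimal_legendrian_immersion n1 U1 \<psi>1 \<and> minimal_legendrian_immersion n2 U2 \<psi>2"
  define x where "x = sqrt ((real n2 + 1) / (real n1 + 1))"
  define \<delta> where "\<delta> = arctan x"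
  have x0: "0 < x" unfolding x_def by simp
  have x2: "x^2 = (real n2 + 1) / (real n1 + 1)" unfolding x_def by simp
  have d0: "0 < \<delta>" unfolding \<delta>_def using x0 by (simp add: zero_less_arctan_iff)
  have d1: "\<delta> < pi / 2" unfolding \<delta>_def by (rule arctan_ubound)
  interpret cset n1 n2 U1 U2 \<psi>1 \<psi>2 \<delta>
    by unfold_locales (use h d0 d1 in \<open>auto simp: minimal_legendrian_immersion_def\<close>)
  have mc1: "\<forall>x\<in>U1. \<forall>j<n1+1. mcurv n1 (n1+1) \<psi>1 x j = 0"
    using h unfolding minimal_legendrian_immersion_def minimal_def by blast
  have mc2: "\<forall>x\<in>U2. \<forall>j<n2+1. mcurv n2 (n2+1) \<psi>2 x j = 0"
    using h unfolding minimal_legendrian_immersion_def minimal_def by blast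
  have c2: "cc^2 = (real n1 + 1) / (real n1 + real n2 + 2)"
  proof -
    have "cc^2 = 1 / (1 + x^2)" unfolding cc_def unfolding \<delta>_def cos_arctan
      by (simp add: power_divide add_nonneg_nonneg)
    also have "\<dots> = (real n1 + 1) / (real n1 + real n2 + 2)" unfolding x2
      by (simp add: field_simps)
    finally show ?thesis .
  qed
  have "minimal kk mm D \<phi>" by (rule minimal_phi[OF mc1 mc2 c2])
  thus "minimal_legendrian_immersion (n1 + n2 + 1) (prod_dom n1 n2 U1 U2)
              (phi_delta n1 n2 (arctan (sqrt ((real n2 + 1) / (real n1 + 1)))) \<psi>1 \<psi>2)"
    unfolding minimal_legendrian_immersion_def m x_def[symmetric] \<delta>_def[symmetric]
    using immersion_phi legendrian_phi by blast
qed

end
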